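(* The following are equivalent for an integral domain $D$: (1) for every nonzero nonunit $x$ of $D$, $xD$ is a $\ast$-product of finitely many $\ast$-f-homog ideals of type $1$; (2) $D$ is a GCD domain that is a $\ast$-GKD.
   Context: $\ast$ is a star operation on $D$ of finite character. A $\ast$-ideal is a nonzero fractional ideal $I$ with $I^\ast=I$; of finite type if $I=J^\ast$ for some nonzero finitely generated $J$. A maximal $\ast$-ideal is an integral $\ast$-ideal maximal among proper integral $\ast$-ideals. A $\ast$-homog ideal is a proper integral $\ast$-ideal $I$ of finite type such that $(A+B)^\ast\neq D$ for every pair $A,B$ of proper integral $\ast$-ideals of finite type containing $I$; it lies in a unique maximal $\ast$-ideal $M(I)$. It is of type $1$ if for each $x\in M(I)\setminus\{0\}$ there is $n\ge1$ with $x^nD_{M(I)}\cap D\subseteq I$. A $\ast$-f-homog ideal is a $\ast$-homog ideal $I$ such that every $\ast$-ideal of finite type containing $I$ is principal; it is of type $1$ if it is also a $\ast$-homog ideal of type $1$. $D$ is a $\ast$-IRKT if $D_P$ is a valuation domain for every maximal $\ast$-ideal $P$, $D=\bigcap_P D_P$ over the maximal $\ast$-ideals with the intersection locally finite, and no two distinct maximal $\ast$-ideals contain a common nonzero prime ideal; $D$ is a $\ast$-GKD if it is a $\ast$-IRKT all of whose maximal $\ast$-ideals have height $1$. *)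

theory Defs
  imports Main
begin

text \<open>The integral domain D is modelled as a subring of a field 'k
(every integral domain is such a subring of its quotient field).
Fractional ideals live inside the quotient field of D, realised in 'k.\<close>

definition subring :: "'k::field set \<Rightarrow> bool" where
  "subring D \<longleftrightarrow> 0 \<in> D \<and> 1 \<in> D \<and>
     (\<forall>a\<in>D. \<forall>b\<in>D. a + b \<in> D \<and> a - b \<in> D \<and> a * b \<in> D)"

definition qf :: "'k::field set \<Rightarrow> 'k set" where
  "qf D = {a / b | a b. a \<in> D \<and> b \<in> D \<and> b \<noteq> 0}"

definition is_unit_in :: "'k::field set \<Rightarrow> 'k \<Rightarrow> bool" where
  "is_unit_in D x \<longleftrightarrow> x \<in> D \<and> (\<exists>y\<in>D. x * y = 1)"

definition dvd_in :: "'k::field set \<Rightarrow> 'k \<Rightarrow> 'k \<Rightarrow> bool" where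
  "dvd_in D a b \<longleftrightarrow> (\<exists>c\<in>D. b = a * c)"

definition gcd_domain :: "'k::field set \<Rightarrow> bool" where
  "gcd_domain D \<longleftrightarrow> subring D \<and>
     (\<forall>a\<in>D. \<forall>b\<in>D. a \<noteq> 0 \<longrightarrow> b \<noteq> 0 \<longrightarrow>
        (\<exists>d\<in>D. dvd_in D d a \<and> dvd_in D d b \<and>
           (\<forall>e\<in>D. dvd_in D e a \<longrightarrow> dvd_in D e b \<longrightarrow> dvd_in D e d)))"

definition submod :: "'k::field set \<Rightarrow> 'k set \<Rightarrow> bool" where
  "submod D I \<longleftrightarrow> 0 \<in> I \<and> (\<forall>a\<in>I. \<forall>b\<in>I. a + b \<in> I) \<and> (\<forall>d\<in>D. \<forall>a\<in>I. d * a \<in> I)"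

definition frac_ideal :: "'k::field set \<Rightarrow> 'k set \<Rightarrow> bool" where
  "frac_ideal D I \<longleftrightarrow> submod D I \<and> (\<exists>d\<in>D. d \<noteq> 0 \<and> (\<forall>a\<in>I. d * a \<in> D))"

definition nz_frac :: "'k::field set \<Rightarrow> 'k set \<Rightarrow> bool" where
  "nz_frac D I \<longleftrightarrow> frac_ideal D I \<and> I \<noteq> {0}"

definition gen_submod :: "'k::field set \<Rightarrow> 'k set \<Rightarrow> 'k set" where
  "gen_submod D S = {(\<Sum>i<(n::nat). c i * s i) | n c s. \<forall>i<n. c i \<in> D \<and> s i \<in> S}"

definition fin_gen :: "'k::field set \<Rightarrow> 'k set \<Rightarrow> bool" where
  "fin_gen D J \<longleftrightarrow> (\<exists>S. finite S \<and> J = gen_submod D S)"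

definition princ :: "'k::field set \<Rightarrow> 'k \<Rightarrow> 'k set" where
  "princ D x = {x * d | d. d \<in> D}"

definition ideal_sum :: "'k::field set \<Rightarrow> 'k set \<Rightarrow> 'k set" where
  "ideal_sum A B = {a + b | a b. a \<in> A \<and> b \<in> B}"

definition ideal_prod :: "'k::field set \<Rightarrow> 'k set \<Rightarrow> 'k set" where
  "ideal_prod A B = {(\<Sum>i<(n::nat). a i * b i) | n a b. \<forall>i<n. a i \<in> A \<and> b i \<in> B}"

definition ideal_prod_list :: "'k::field set \<Rightarrow> 'k set list \<Rightarrow> 'k set" where
  "ideal_prod_list D Is = foldr ideal_prod Is D"

definition star_op :: "'k::field set \<Rightarrow> ('k set \<Rightarrow> 'k set) \<Rightarrow> bool" where
  "star_op D st \<longleftrightarrow>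
     (\<forall>I. nz_frac D I \<longrightarrow> nz_frac D (st I)) \<and>
     (\<forall>x\<in>qf D. x \<noteq> 0 \<longrightarrow> st (princ D x) = princ D x) \<and>
     (\<forall>x\<in>qf D. \<forall>I. x \<noteq> 0 \<longrightarrow> nz_frac D I \<longrightarrow> st ((*) x ` I) = (*) x ` st I) \<and>
     (\<forall>I. nz_frac D I \<longrightarrow> I \<subseteq> st I) \<and>
     (\<forall>I J. nz_frac D I \<longrightarrow> nz_frac D J \<longrightarrow> I \<subseteq> J \<longrightarrow> st I \<subseteq> st J) \<and>
     (\<forall>I. nz_frac D I \<longrightarrow> st (st I) = st I)"

definition finite_character :: "'k::field set \<Rightarrow> ('k set \<Rightarrow> 'k set) \<Rightarrow> bool" where
  "finite_character D st \<longleftrightarrow>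
     (\<forall>I. nz_frac D I \<longrightarrow>
        st I = \<Union>{st J | J. J \<subseteq> I \<and> nz_frac D J \<and> fin_gen D J})"

definition star_ideal :: "'k::field set \<Rightarrow> ('k set \<Rightarrow> 'k set) \<Rightarrow> 'k set \<Rightarrow> bool" where
  "star_ideal D st I \<longleftrightarrow> nz_frac D I \<and> st I = I"

definition finite_type :: "'k::field set \<Rightarrow> ('k set \<Rightarrow> 'k set) \<Rightarrow> 'k set \<Rightarrow> bool" where
  "finite_type D st I \<longleftrightarrow> (\<exists>J. nz_frac D J \<and> fin_gen D J \<and> I = st J)"

definition proper_int_star :: "'k::field set \<Rightarrow> ('k set \<Rightarrow> 'k set) \<Rightarrow> 'k set \<Rightarrow> bool" where
  "proper_int_star D st I \<longleftrightarrow> star_ideal D st I \<and> I \<subseteq> D \<and> I \<noteq> D"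

definition max_star :: "'k::field set \<Rightarrow> ('k set \<Rightarrow> 'k set) \<Rightarrow> 'k set \<Rightarrow> bool" where
  "max_star D st P \<longleftrightarrow> proper_int_star D st P \<and>
     (\<forall>J. proper_int_star D st J \<longrightarrow> P \<subseteq> J \<longrightarrow> J = P)"

definition star_homog :: "'k::field set \<Rightarrow> ('k set \<Rightarrow> 'k set) \<Rightarrow> 'k set \<Rightarrow> bool" where
  "star_homog D st I \<longleftrightarrow> proper_int_star D st I \<and> finite_type D st I \<and>
     (\<forall>A B. proper_int_star D st A \<longrightarrow> finite_type D st A \<longrightarrow> I \<subseteq> A \<longrightarrow>
            proper_int_star D st B \<longrightarrow> finite_type D st B \<longrightarrow> I \<subseteq> B \<longrightarrow>
            st (ideal_sum A B) \<noteq> D)"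

text \<open>M(I): the (unique) maximal star-ideal containing I\<close>
definition M_of :: "'k::field set \<Rightarrow> ('k set \<Rightarrow> 'k set) \<Rightarrow> 'k set \<Rightarrow> 'k set" where
  "M_of D st I = (THE M. max_star D st M \<and> I \<subseteq> M)"

definition loc :: "'k::field set \<Rightarrow> 'k set \<Rightarrow> 'k set" where
  "loc D P = {a / s | a s. a \<in> D \<and> s \<in> D \<and> s \<notin> P}"

definition homog_type1 :: "'k::field set \<Rightarrow> ('k set \<Rightarrow> 'k set) \<Rightarrow> 'k set \<Rightarrow> bool" where
  "homog_type1 D st I \<longleftrightarrow> star_homog D st I \<and>
     (\<forall>x\<in>M_of D st I. x \<noteq> 0 \<longrightarrow>
        (\<exists>n\<ge>1. ((*) (x ^ n) ` loc D (M_of D st I)) \<inter> D \<subseteq> I))"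

definition star_fhomog :: "'k::field set \<Rightarrow> ('k set \<Rightarrow> 'k set) \<Rightarrow> 'k set \<Rightarrow> bool" where
  "star_fhomog D st I \<longleftrightarrow> star_homog D st I \<and>
     (\<forall>J. star_ideal D st J \<longrightarrow> finite_type D st J \<longrightarrow> I \<subseteq> J \<longrightarrow> (\<exists>y. J = princ D y))"

definition fhomog_type1 :: "'k::field set \<Rightarrow> ('k set \<Rightarrow> 'k set) \<Rightarrow> 'k set \<Rightarrow> bool" where
  "fhomog_type1 D st I \<longleftrightarrow> star_fhomog D st I \<and> homog_type1 D st I"

definition valuation_domain :: "'k::field set \<Rightarrow> bool" where
  "valuation_domain V \<longleftrightarrow> subring V \<and>
     (\<forall>x\<in>qf V. x \<noteq> 0 \<longrightarrow> x \<in> V \<or> inverse x \<in> V)"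

definition prime_ideal :: "'k::field set \<Rightarrow> 'k set \<Rightarrow> bool" where
  "prime_ideal D Q \<longleftrightarrow> submod D Q \<and> Q \<subseteq> D \<and> Q \<noteq> D \<and>
     (\<forall>a\<in>D. \<forall>b\<in>D. a * b \<in> Q \<longrightarrow> a \<in> Q \<or> b \<in> Q)"

definition height_one :: "'k::field set \<Rightarrow> 'k set \<Rightarrow> bool" where
  "height_one D P \<longleftrightarrow> prime_ideal D P \<and> P \<noteq> {0} \<and>
     (\<forall>Q. prime_ideal D Q \<longrightarrow> Q \<noteq> {0} \<longrightarrow> Q \<subseteq> P \<longrightarrow> Q = P)"

definition star_IRKT :: "'k::field set \<Rightarrow> ('k set \<Rightarrow> 'k set) \<Rightarrow> bool" where
  "star_IRKT D st \<longleftrightarrow>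
     (\<forall>P. max_star D st P \<longrightarrow> valuation_domain (loc D P)) \<and>
     D = qf D \<inter> \<Inter>{loc D P | P. max_star D st P} \<and>
     (\<forall>x\<in>D. x \<noteq> 0 \<longrightarrow> finite {P. max_star D st P \<and> x \<in> P}) \<and>
     (\<forall>P1 P2. max_star D st P1 \<longrightarrow> max_star D st P2 \<longrightarrow> P1 \<noteq> P2 \<longrightarrow>
        \<not> (\<exists>Q. prime_ideal D Q \<and> Q \<noteq> {0} \<and> Q \<subseteq> P1 \<and> Q \<subseteq> P2))"

definition star_GKD :: "'k::field set \<Rightarrow> ('k set \<Rightarrow> 'k set) \<Rightarrow> bool" where
  "star_GKD D st \<longleftrightarrow> star_IRKT D st \<and> (\<forall>P. max_star D st P \<longrightarrow> height_one D P)"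

end

theory Submission
  imports Defs
begin


locale dom = fixes D :: "'k::field set" assumes sr: "subring D"
begin

lemma zero[simp,intro]: "0 \<in> D" and one[simp,intro]: "1 \<in> D"
  using sr by (auto simp: subring_def)
lemma add[intro]: "a \<in> D \<Longrightarrow> b \<in> D \<Longrightarrow> a + b \<in> D"
  and diff[intro]: "a \<in> D \<Longrightarrow> b \<in> D \<Longrightarrow> a - b \<in> D"
  and mult[intro]: "a \<in> D \<Longrightarrow> b \<in> D \<Longrightarrow> a * b \<in> D"
  using sr by (auto simp: subring_def)
lemma uminus[intro]: "a \<in> D \<Longrightarrow> - a \<in> D"
  using diff[of 0 a] by simp
lemma power[intro]: "a \<in> D \<Longrightarrow> a ^ n \<in> D"
  by (induction n) auto
lemma sumD[intro]: "(\<And>i. i \<in> A \<Longrightarrow> f i \<in> D) \<Longrightarrow> sum f A \<in> D"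
  by (induction A rule: infinite_finite_induct) auto
lemma prodD[intro]: "(\<And>i. i \<in> A \<Longrightarrow> f i \<in> D) \<Longrightarrow> prod f A \<in> D"
  by (induction A rule: infinite_finite_induct) auto
lemma prod_listD[intro]: "set xs \<subseteq> D \<Longrightarrow> prod_list xs \<in> D"
  by (induction xs) auto

lemma qf_D: "a \<in> D \<Longrightarrow> a \<in> qf D"
  unfolding qf_def by (rule CollectI, rule exI[of _ a], rule exI[of _ 1]) auto
lemma qfE: "x \<in> qf D \<Longrightarrow> (\<And>a b. a \<in> D \<Longrightarrow> b \<in> D \<Longrightarrow> b \<noteq> 0 \<Longrightarrow> x = a / b \<Longrightarrow> P) \<Longrightarrow> P"
  unfolding qf_def by auto
lemma qfI: "a \<in> D \<Longrightarrow> b \<in> D \<Longrightarrow> b \<noteq> 0 \<Longrightarrow> a / b \<in> qf D"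
  unfolding qf_def by auto
lemma qf_mult[intro]: "x \<in> qf D \<Longrightarrow> y \<in> qf D \<Longrightarrow> x * y \<in> qf D"
  apply (elim qfE) subgoal for a b c d using qfI[of "a*c" "b*d"] by auto done
lemma qf_add[intro]: "x \<in> qf D \<Longrightarrow> y \<in> qf D \<Longrightarrow> x + y \<in> qf D"
proof (elim qfE)
  fix a b c d assume h: "a \<in> D" "b \<in> D" "b \<noteq> 0" "x = a / b" "c \<in> D" "d \<in> D" "d \<noteq> 0" "y = c / d"
  hence "x + y = (a*d+c*b)/(b*d)" by (simp add: field_simps)
  thus ?thesis using qfI[of "a*d+c*b" "b*d"] h by auto
qed
lemma qf_uminus[intro]: "x \<in> qf D \<Longrightarrow> - x \<in> qf D"
  apply (elim qfE) subgoal for a b using qfI[of "-a" "b"] by auto done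
lemma qf_inverse[intro]: "x \<in> qf D \<Longrightarrow> inverse x \<in> qf D"
  apply (elim qfE) subgoal for a b using qfI[of "b" "a"] qf_D[OF zero] by (cases "a = 0") auto done
lemma qf_divide[intro]: "x \<in> qf D \<Longrightarrow> y \<in> qf D \<Longrightarrow> x / y \<in> qf D"
  by (simp add: divide_inverse qf_mult qf_inverse)
lemma qf_zero[simp,intro]: "0 \<in> qf D" and qf_one[simp,intro]: "1 \<in> qf D" using qf_D by auto

lemma unit_iff: "is_unit_in D x \<longleftrightarrow> x \<in> D \<and> x \<noteq> 0 \<and> inverse x \<in> D"
  unfolding is_unit_in_def
  by (metis field_class.field_inverse inverse_unique mult_zero_left zero_neq_one)

lemma dvd_in_refl: "a \<in> D \<Longrightarrow> dvd_in D a a" unfolding dvd_in_def by (rule bexI[of _ 1]) auto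
lemma dvd_in_trans: "dvd_in D a b \<Longrightarrow> dvd_in D b c \<Longrightarrow> dvd_in D a c"
  unfolding dvd_in_def by (metis mult.assoc mult)

lemma princ_mem[intro]: "d \<in> D \<Longrightarrow> x * d \<in> princ D x" unfolding princ_def by auto
lemma princ_self[intro]: "x \<in> princ D x" using princ_mem[of 1 x] by simp
lemma princ_iff: "y \<in> princ D x \<longleftrightarrow> (\<exists>d\<in>D. y = x * d)" unfolding princ_def by auto
lemma princ_dvd: "y \<in> princ D x \<longleftrightarrow> dvd_in D x y" unfolding princ_iff dvd_in_def by auto
lemma princ_one[simp]: "princ D 1 = D" unfolding princ_def by auto
lemma princ_sub_D: "x \<in> D \<Longrightarrow> princ D x \<subseteq> D" unfolding princ_def by auto
lemma princ_submod: "submod D (princ D x)"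
  unfolding submod_def
proof (intro conjI ballI)
  show "0 \<in> princ D x" using princ_mem[of 0 x] by simp
next
  fix a b assume "a \<in> princ D x" "b \<in> princ D x"
  then obtain d e where "d \<in> D" "e \<in> D" "a = x * d" "b = x * e" unfolding princ_iff by blast
  thus "a + b \<in> princ D x" unfolding princ_iff by (intro bexI[of _ "d+e"]) (auto simp: distrib_left)
next
  fix c a assume "c \<in> D" "a \<in> princ D x"
  then obtain d where "d \<in> D" "a = x * d" unfolding princ_iff by blast
  thus "c * a \<in> princ D x" unfolding princ_iff using \<open>c \<in> D\<close> by (intro bexI[of _ "c*d"]) (auto simp: mult.left_commute)
qed
lemma princ_zero[simp]: "princ D 0 = {0}" unfolding princ_def by auto

lemma submod_0: "submod D I \<Longrightarrow> 0 \<in> I" unfolding submod_def by auto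
lemma submod_add: "submod D I \<Longrightarrow> a \<in> I \<Longrightarrow> b \<in> I \<Longrightarrow> a + b \<in> I" unfolding submod_def by auto
lemma submod_mult: "submod D I \<Longrightarrow> d \<in> D \<Longrightarrow> a \<in> I \<Longrightarrow> d * a \<in> I" unfolding submod_def by auto
lemma submod_mult': "submod D I \<Longrightarrow> d \<in> D \<Longrightarrow> a \<in> I \<Longrightarrow> a * d \<in> I"
  using submod_mult by (metis mult.commute)
lemma submod_uminus: "submod D I \<Longrightarrow> a \<in> I \<Longrightarrow> - a \<in> I"
  using submod_mult[of I "-1" a] by auto
lemma submod_diff: "submod D I \<Longrightarrow> a \<in> I \<Longrightarrow> b \<in> I \<Longrightarrow> a - b \<in> I"
  using submod_add submod_uminus by (metis diff_conv_add_uminus)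
lemma submod_sum: "submod D I \<Longrightarrow> (\<And>i. i \<in> A \<Longrightarrow> f i \<in> I) \<Longrightarrow> sum f A \<in> I"
  by (induction A rule: infinite_finite_induct) (auto intro: submod_0 submod_add)
lemma princ_least: "submod D I \<Longrightarrow> x \<in> I \<Longrightarrow> princ D x \<subseteq> I"
proof
  fix y assume "submod D I" "x \<in> I" "y \<in> princ D x"
  then obtain d where "d \<in> D" "y = x * d" unfolding princ_iff by blast
  thus "y \<in> I" using submod_mult' \<open>submod D I\<close> \<open>x \<in> I\<close> by blast
qed
lemma submod_one: "submod D I \<Longrightarrow> I \<subseteq> D \<Longrightarrow> 1 \<in> I \<Longrightarrow> I = D"
  using princ_least[of I 1] by auto
lemma submod_unit: "submod D I \<Longrightarrow> I \<subseteq> D \<Longrightarrow> x \<in> I \<Longrightarrow> is_unit_in D x \<Longrightarrow> I = D"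
  unfolding is_unit_in_def using submod_mult submod_one by (metis mult.commute)
lemma submod_D: "submod D D" unfolding submod_def by auto

lemma frac_qf: "frac_ideal D I \<Longrightarrow> a \<in> I \<Longrightarrow> a \<in> qf D"
  unfolding frac_ideal_def
proof (elim conjE bexE)
  fix d assume "d \<in> D" "d \<noteq> 0" "\<forall>a\<in>I. d * a \<in> D" "a \<in> I"
  hence "a = (d*a)/d" "d * a \<in> D" by auto
  thus ?thesis using qfI \<open>d \<in> D\<close> \<open>d \<noteq> 0\<close> by metis
qed
lemma frac_int: "submod D I \<Longrightarrow> I \<subseteq> D \<Longrightarrow> frac_ideal D I"
  unfolding frac_ideal_def by (auto intro!: bexI[of _ 1])
lemma nz_int: "submod D I \<Longrightarrow> I \<subseteq> D \<Longrightarrow> I \<noteq> {0} \<Longrightarrow> nz_frac D I"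
  unfolding nz_frac_def using frac_int by auto
lemma nz_frac_ex: "nz_frac D I \<Longrightarrow> \<exists>a\<in>I. a \<noteq> 0"
  unfolding nz_frac_def frac_ideal_def using submod_0 by blast
lemma nz_D: "nz_frac D D"
proof (rule nz_int[OF submod_D])
  show "D \<noteq> {0}" using one by (metis singletonD zero_neq_one)
qed auto

lemma princ_nz: "x \<in> qf D \<Longrightarrow> x \<noteq> 0 \<Longrightarrow> nz_frac D (princ D x)"
proof (elim qfE)
  fix a b assume h: "a \<in> D" "b \<in> D" "b \<noteq> 0" "x = a / b" "x \<noteq> 0"
  have "frac_ideal D (princ D x)" unfolding frac_ideal_def
  proof (intro conjI princ_submod bexI[of _ b] ballI)
    fix y assume "y \<in> princ D x"
    then obtain d where "d \<in> D" "y = x * d" unfolding princ_iff by auto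
    hence "b * y = a * d" using h by simp
    thus "b * y \<in> D" using h \<open>d \<in> D\<close> by (simp add: mult)
  qed (use h in simp_all)
  moreover have "princ D x \<noteq> {0}" using princ_self[of x] h(5) by blast
  ultimately show ?thesis unfolding nz_frac_def by auto
qed

lemma princ_image: "(*) c ` princ D x = princ D (c * x)"
  unfolding princ_def by (auto simp: image_iff mult.assoc)

lemma princ_eq_imp: "a \<in> D \<Longrightarrow> princ D a = princ D b \<Longrightarrow> \<exists>u. is_unit_in D u \<and> a = b * u"
proof -
  assume a: "a \<in> D" and e: "princ D a = princ D b"
  obtain u where u: "u \<in> D" "a = b * u" using princ_self[of a] e princ_iff by blast
  obtain v where v: "v \<in> D" "b = a * v" using princ_self[of b] e princ_iff by blast
  show ?thesis
  proof (cases "a = 0")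
    case True
    hence "b = 0" using v by simp
    thus ?thesis using True by (intro exI[of _ 1]) (auto simp: is_unit_in_def)
  next
    case False
    hence "u * v = 1" using u v by (metis mult.assoc mult_cancel_left1)
    thus ?thesis using u v unfolding is_unit_in_def by auto
  qed
qed

lemma princ_unit: "is_unit_in D u \<Longrightarrow> princ D (b * u) = princ D b"
proof -
  assume "is_unit_in D u"
  then obtain v where v: "u \<in> D" "v \<in> D" "u * v = 1" unfolding is_unit_in_def by auto
  show ?thesis unfolding princ_iff set_eq_iff
  proof (intro allI iffI)
    fix y assume "\<exists>d\<in>D. y = b * u * d"
    then obtain d where "d \<in> D" "y = b * u * d" by auto
    thus "\<exists>d\<in>D. y = b * d" using v by (intro bexI[of _ "u*d"]) (auto simp: mult.assoc)
  next
    fix y assume "\<exists>d\<in>D. y = b * d"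
    then obtain d where "d \<in> D" "y = b * d" by auto
    moreover have "b * d = b * u * (v * d)" using v by (simp add: mult.assoc[symmetric] mult.commute[of b] )
    ultimately show "\<exists>d\<in>D. y = b * u * d" using v by blast
  qed
qed

lemma sum_split_nat: "(\<Sum>i<n+(m::nat). f i) = (\<Sum>i<n. f i) + (\<Sum>i<m. (f (n + i)::'k))"
  by (induction m) (auto simp: add.assoc)

lemma gen_submod_iff: "x \<in> gen_submod D S \<longleftrightarrow> (\<exists>n c s. (\<forall>i<n. c i \<in> D \<and> s i \<in> S) \<and> x = (\<Sum>i<(n::nat). c i * s i))"
  unfolding gen_submod_def by auto

lemma gen_sub: "S \<subseteq> gen_submod D S"
proof
  fix x assume "x \<in> S"
  thus "x \<in> gen_submod D S" unfolding gen_submod_iff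
    by (intro exI[of _ 1] exI[of _ "\<lambda>_. 1"] exI[of _ "\<lambda>_. x"]) auto
qed

lemma gen_least: "submod D M \<Longrightarrow> S \<subseteq> M \<Longrightarrow> gen_submod D S \<subseteq> M"
  unfolding gen_submod_def by (auto intro!: submod_sum submod_mult)

lemma gen_is_submod: "submod D (gen_submod D S)"
  unfolding submod_def
proof (intro conjI ballI)
  show "0 \<in> gen_submod D S" unfolding gen_submod_iff by (intro exI[of _ 0]) auto
next
  fix a b assume "a \<in> gen_submod D S" "b \<in> gen_submod D S"
  then obtain n c s m c' s' where h [rule_format]: "\<forall>i<(n::nat). c i \<in> D \<and> s i \<in> S" "a = (\<Sum>i<n. c i * s i)"
     "\<forall>i<(m::nat). c' i \<in> D \<and> s' i \<in> S" "b = (\<Sum>i<m. c' i * s' i)" unfolding gen_submod_iff by blast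
  define C where "C i = (if i < n then c i else c' (i - n))" for i
  define T where "T i = (if i < n then s i else s' (i - n))" for i
  have "a + b = (\<Sum>i<n+m. C i * T i)" unfolding sum_split_nat h C_def T_def by simp
  moreover have "\<forall>i<n+m. C i \<in> D \<and> T i \<in> S" using h unfolding C_def T_def by auto
  ultimately show "a + b \<in> gen_submod D S" unfolding gen_submod_iff by blast
next
  fix d a assume "d \<in> D" "a \<in> gen_submod D S"
  then obtain n c s where h: "\<forall>i<(n::nat). c i \<in> D \<and> s i \<in> S" "a = (\<Sum>i<n. c i * s i)"
    unfolding gen_submod_iff by blast
  have e: "d * a = (\<Sum>i<n. (d * c i) * s i)" unfolding h by (simp add: sum_distrib_left mult.assoc)
  show "d * a \<in> gen_submod D S" unfolding gen_submod_iff using h(1) \<open>d \<in> D\<close>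
    by (intro exI[of _ n] exI[of _ "\<lambda>i. d * c i"] exI[of _ s] conjI e) (auto simp: mult)
qed

lemma gen_mono: "S \<subseteq> T \<Longrightarrow> gen_submod D S \<subseteq> gen_submod D T"
  using gen_least[OF gen_is_submod] gen_sub by blast

lemma gen_single: "gen_submod D {a} = princ D a"
  using gen_least[OF princ_submod, of "{a}" a] princ_least[OF gen_is_submod, of a "{a}"] gen_sub[of "{a}"]
  by auto

lemma sum_submod: "submod D A \<Longrightarrow> submod D B \<Longrightarrow> submod D (ideal_sum A B)"
  unfolding submod_def ideal_sum_def
proof (intro conjI ballI; elim conjE)
  assume "0 \<in> A" "0 \<in> B" thus "0 \<in> {a + b |a b. a \<in> A \<and> b \<in> B}" by force
next
  fix x y assume A: "\<forall>a\<in>A. \<forall>b\<in>A. a + b \<in> A" and B: "\<forall>a\<in>B. \<forall>b\<in>B. a + b \<in> B"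
    and "x \<in> {a + b |a b. a \<in> A \<and> b \<in> B}" "y \<in> {a + b |a b. a \<in> A \<and> b \<in> B}"
  then obtain a b a' b' where "x = a + b" "y = a' + b'" "a \<in> A" "a' \<in> A" "b \<in> B" "b' \<in> B" by auto
  moreover have "x + y = (a + a') + (b + b')" using calculation by simp
  ultimately show "x + y \<in> {a + b |a b. a \<in> A \<and> b \<in> B}" using A B by blast
next
  fix d x assume A: "\<forall>d\<in>D. \<forall>a\<in>A. d * a \<in> A" and B: "\<forall>d\<in>D. \<forall>a\<in>B. d * a \<in> B"
    and "d \<in> D" "x \<in> {a + b |a b. a \<in> A \<and> b \<in> B}"
  then obtain a b where "x = a + b" "a \<in> A" "b \<in> B" by auto
  moreover have "d * x = d * a + d * b" using calculation by (simp add: algebra_simps)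
  ultimately show "d * x \<in> {a + b |a b. a \<in> A \<and> b \<in> B}" using A B \<open>d \<in> D\<close> by blast
qed

lemma sum_left: "submod D B \<Longrightarrow> A \<subseteq> ideal_sum A B"
  unfolding ideal_sum_def using submod_0 by force
lemma sum_right: "submod D A \<Longrightarrow> B \<subseteq> ideal_sum A B"
  unfolding ideal_sum_def using submod_0 by force
lemma sum_least: "submod D M \<Longrightarrow> A \<subseteq> M \<Longrightarrow> B \<subseteq> M \<Longrightarrow> ideal_sum A B \<subseteq> M"
  unfolding ideal_sum_def using submod_add by blast
lemma sum_mono: "A \<subseteq> A' \<Longrightarrow> B \<subseteq> B' \<Longrightarrow> ideal_sum A B \<subseteq> ideal_sum A' B'"
  unfolding ideal_sum_def by blast

lemma gen_insert: "gen_submod D (insert s S) = ideal_sum (princ D s) (gen_submod D S)"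
proof
  have "insert s S \<subseteq> ideal_sum (princ D s) (gen_submod D S)"
  proof -
    have "s \<in> ideal_sum (princ D s) (gen_submod D S)"
      using sum_left[OF gen_is_submod, of "princ D s" S] princ_self[of s] by blast
    moreover have "S \<subseteq> ideal_sum (princ D s) (gen_submod D S)"
      using sum_right[OF princ_submod, of "gen_submod D S" s] gen_sub[of S] by blast
    ultimately show ?thesis by blast
  qed
  thus "gen_submod D (insert s S) \<subseteq> ideal_sum (princ D s) (gen_submod D S)"
    using gen_least[OF sum_submod[OF princ_submod gen_is_submod]] by blast
  have a: "princ D s \<subseteq> gen_submod D (insert s S)"
    using princ_least[OF gen_is_submod] gen_sub[of "insert s S"] by blast
  have b: "gen_submod D S \<subseteq> gen_submod D (insert s S)" by (rule gen_mono) blast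
  show "ideal_sum (princ D s) (gen_submod D S) \<subseteq> gen_submod D (insert s S)"
    by (rule sum_least[OF gen_is_submod a b])
qed

lemma gen_pair: "gen_submod D {a, b} = ideal_sum (princ D a) (princ D b)"
  using gen_insert[of a "{b}"] gen_single by simp


lemma common_denom: "finite S \<Longrightarrow> S \<subseteq> qf D \<Longrightarrow> \<exists>d\<in>D. d \<noteq> 0 \<and> (\<forall>s\<in>S. d * s \<in> D)"
proof (induction S rule: finite_induct)
  case empty thus ?case by (intro bexI[of _ 1]) auto
next
  case (insert x S)
  then obtain d where d: "d \<in> D" "d \<noteq> 0" "\<forall>s\<in>S. d * s \<in> D" by auto
  from insert have "x \<in> qf D" by auto
  then obtain a b where ab: "a \<in> D" "b \<in> D" "b \<noteq> 0" "x = a / b" by (rule qfE)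
  have "d * b \<in> D" using d ab by (simp add: mult)
  moreover have "d * b * x \<in> D" using d ab by (simp add: mult)
  moreover have "\<forall>s\<in>S. d * b * s \<in> D" using d ab
    by (metis mult mult.assoc mult.commute)
  ultimately show ?case using d ab by (intro bexI[of _ "d*b"]) auto
qed

lemma gen_frac: "finite S \<Longrightarrow> S \<subseteq> qf D \<Longrightarrow> frac_ideal D (gen_submod D S)"
proof -
  assume "finite S" "S \<subseteq> qf D"
  then obtain d where d: "d \<in> D" "d \<noteq> 0" "\<forall>s\<in>S. d * s \<in> D" using common_denom by blast
  have "submod D {a. d * a \<in> D}" unfolding submod_def
    by (auto simp: distrib_left mult.left_commute[of d] add mult)
  hence "gen_submod D S \<subseteq> {a. d * a \<in> D}" using gen_least d(3) by blast
  thus ?thesis unfolding frac_ideal_def using gen_is_submod d by blast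
qed

lemma gen_nz: "finite S \<Longrightarrow> S \<subseteq> qf D \<Longrightarrow> s \<in> S \<Longrightarrow> s \<noteq> 0 \<Longrightarrow> nz_frac D (gen_submod D S)"
  unfolding nz_frac_def using gen_frac gen_sub by blast

lemma sum_frac: "frac_ideal D A \<Longrightarrow> frac_ideal D B \<Longrightarrow> frac_ideal D (ideal_sum A B)"
proof -
  assume A: "frac_ideal D A" and B: "frac_ideal D B"
  then obtain d e where d: "d \<in> D" "d \<noteq> 0" "\<forall>a\<in>A. d * a \<in> D" and e: "e \<in> D" "e \<noteq> 0" "\<forall>a\<in>B. e * a \<in> D"
    unfolding frac_ideal_def by blast
  have "\<forall>x\<in>ideal_sum A B. (d * e) * x \<in> D"
  proof
    fix x assume "x \<in> ideal_sum A B"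
    then obtain a b where "a \<in> A" "b \<in> B" "x = a + b" unfolding ideal_sum_def by blast
    moreover have "(d * e) * (a + b) = e * (d * a) + d * (e * b)" by (simp add: algebra_simps)
    ultimately show "(d * e) * x \<in> D" using d e by (simp add: add mult)
  qed
  moreover have "submod D (ideal_sum A B)" using A B sum_submod unfolding frac_ideal_def by blast
  ultimately show ?thesis unfolding frac_ideal_def using d e by (intro conjI bexI[of _ "d*e"]) (auto simp: mult)
qed

lemma sum_nz: "nz_frac D A \<Longrightarrow> nz_frac D B \<Longrightarrow> nz_frac D (ideal_sum A B)"
proof -
  assume A: "nz_frac D A" and B: "nz_frac D B"
  hence "A \<subseteq> ideal_sum A B" using sum_left unfolding nz_frac_def frac_ideal_def by blast
  moreover obtain a where "a \<in> A" "a \<noteq> 0" using nz_frac_ex A by blast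
  ultimately show ?thesis using sum_frac A B unfolding nz_frac_def by blast
qed

lemma scale_submod: "submod D I \<Longrightarrow> submod D ((*) c ` I)"
  unfolding submod_def
  by (auto simp: image_iff distrib_left[symmetric] mult.left_commute[of _ c])

lemma scale_nz: "c \<in> qf D \<Longrightarrow> c \<noteq> 0 \<Longrightarrow> nz_frac D I \<Longrightarrow> nz_frac D ((*) c ` I)"
proof -
  assume c: "c \<in> qf D" "c \<noteq> 0" and I: "nz_frac D I"
  obtain a b where ab: "a \<in> D" "b \<in> D" "b \<noteq> 0" "c = a / b" using c(1) by (rule qfE)
  obtain d where d: "d \<in> D" "d \<noteq> 0" "\<forall>x\<in>I. d * x \<in> D" using I unfolding nz_frac_def frac_ideal_def by blast
  have "\<forall>y\<in>(*) c ` I. (b * d) * y \<in> D"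
  proof
    fix y assume "y \<in> (*) c ` I"
    then obtain x where "x \<in> I" "y = c * x" by blast
    moreover have "(b * d) * (c * x) = a * (d * x)" using ab by (simp add: field_simps)
    moreover have "d * x \<in> D" using d calculation(1) by blast
    ultimately show "(b * d) * y \<in> D" using mult[OF ab(1)] by metis
  qed
  moreover obtain x where "x \<in> I" "x \<noteq> 0" using nz_frac_ex I by blast
  moreover have "submod D ((*) c ` I)" using scale_submod I unfolding nz_frac_def frac_ideal_def by blast
  moreover have "b * d \<in> D" "b * d \<noteq> 0" using ab d by (auto simp: mult)
  ultimately have "frac_ideal D ((*) c ` I)" unfolding frac_ideal_def by blast
  moreover have "c * x \<in> (*) c ` I" "c * x \<noteq> 0" using \<open>x \<in> I\<close> \<open>x \<noteq> 0\<close> c by auto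
  ultimately show ?thesis unfolding nz_frac_def by (metis singletonD)
qed

lemma gen_scale: "(*) c ` gen_submod D S = gen_submod D ((*) c ` S)"
proof
  show "(*) c ` gen_submod D S \<subseteq> gen_submod D ((*) c ` S)"
  proof
    fix y assume "y \<in> (*) c ` gen_submod D S"
    then obtain x where x: "x \<in> gen_submod D S" "y = c * x" by blast
    then obtain n f g where h: "\<forall>i<(n::nat). f i \<in> D \<and> g i \<in> S" "x = (\<Sum>i<n. f i * g i)"
      unfolding gen_submod_iff by blast
    have e: "y = (\<Sum>i<n. f i * (c * g i))" unfolding h x by (simp add: sum_distrib_left algebra_simps)
    have "\<forall>i<n. f i \<in> D \<and> c * g i \<in> (*) c ` S" using h(1) by blast
    thus "y \<in> gen_submod D ((*) c ` S)" unfolding gen_submod_iff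
      by (intro exI[of _ n] exI[of _ f] exI[of _ "\<lambda>i. c * g i"] conjI e)
  qed
  have "submod D ((*) c ` gen_submod D S)" by (rule scale_submod[OF gen_is_submod])
  moreover have "(*) c ` S \<subseteq> (*) c ` gen_submod D S" using gen_sub by blast
  ultimately show "gen_submod D ((*) c ` S) \<subseteq> (*) c ` gen_submod D S" by (rule gen_least)
qed

end

locale sd = dom + fixes st :: "'k::field set \<Rightarrow> 'k set"
  assumes so: "star_op D st" and fc: "finite_character D st"
begin

lemmas so_parts = so[unfolded star_op_def]
lemma st_nz: "nz_frac D I \<Longrightarrow> nz_frac D (st I)" using so_parts[THEN conjunct1] by simp
lemma st_princ: "x \<in> qf D \<Longrightarrow> x \<noteq> 0 \<Longrightarrow> st (princ D x) = princ D x"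
  using so_parts[THEN conjunct2, THEN conjunct1] by simp
lemma st_scale: "x \<in> qf D \<Longrightarrow> x \<noteq> 0 \<Longrightarrow> nz_frac D I \<Longrightarrow> st ((*) x ` I) = (*) x ` st I"
  using so_parts[THEN conjunct2, THEN conjunct2, THEN conjunct1] by simp
lemma st_ext: "nz_frac D I \<Longrightarrow> I \<subseteq> st I"
  using so_parts[THEN conjunct2, THEN conjunct2, THEN conjunct2, THEN conjunct1] by simp
lemma st_mono: "nz_frac D I \<Longrightarrow> nz_frac D J \<Longrightarrow> I \<subseteq> J \<Longrightarrow> st I \<subseteq> st J"
  using so_parts[THEN conjunct2, THEN conjunct2, THEN conjunct2, THEN conjunct2, THEN conjunct1] by simp
lemma st_idem: "nz_frac D I \<Longrightarrow> st (st I) = st I"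
  using so_parts[THEN conjunct2, THEN conjunct2, THEN conjunct2, THEN conjunct2, THEN conjunct2] by simp
lemma st_D: "st D = D" using st_princ[of 1] by simp
lemma st_submod: "nz_frac D I \<Longrightarrow> submod D (st I)"
  using st_nz unfolding nz_frac_def frac_ideal_def by blast

lemma st_sub_princ: "nz_frac D I \<Longrightarrow> x \<in> qf D \<Longrightarrow> x \<noteq> 0 \<Longrightarrow> I \<subseteq> princ D x \<Longrightarrow> st I \<subseteq> princ D x"
proof -
  assume "nz_frac D I" "x \<in> qf D" "x \<noteq> 0" "I \<subseteq> princ D x"
  thus ?thesis using st_mono[of I "princ D x"] princ_nz[of x] st_princ[of x] by simp
qed
lemma st_int: "nz_frac D I \<Longrightarrow> I \<subseteq> D \<Longrightarrow> st I \<subseteq> D"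
  using st_sub_princ[of I 1] by simp

lemma st_sum: "nz_frac D A \<Longrightarrow> nz_frac D B \<Longrightarrow> st (ideal_sum A B) = st (ideal_sum A (st B))"
proof -
  assume A: "nz_frac D A" and B: "nz_frac D B"
  have sB: "nz_frac D (st B)" using st_nz B .
  have nz1: "nz_frac D (ideal_sum A B)" using sum_nz A B .
  have nz2: "nz_frac D (ideal_sum A (st B))" using sum_nz A sB .
  have "ideal_sum A B \<subseteq> ideal_sum A (st B)" using sum_mono st_ext B by blast
  hence 1: "st (ideal_sum A B) \<subseteq> st (ideal_sum A (st B))" using st_mono nz1 nz2 by blast
  have "A \<subseteq> st (ideal_sum A B)" using sum_left st_ext nz1 B unfolding nz_frac_def frac_ideal_def by blast
  moreover have "st B \<subseteq> st (ideal_sum A B)"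
    using st_mono[OF B nz1] sum_right A unfolding nz_frac_def frac_ideal_def by blast
  ultimately have "ideal_sum A (st B) \<subseteq> st (ideal_sum A B)" using sum_least st_submod nz1 by blast
  hence "st (ideal_sum A (st B)) \<subseteq> st (ideal_sum A B)"
    using st_mono[OF nz2 st_nz[OF nz1]] st_idem[OF nz1] by simp
  thus ?thesis using 1 by blast
qed

lemma st_star: "nz_frac D I \<Longrightarrow> star_ideal D st (st I)"
  unfolding star_ideal_def using st_nz st_idem by blast

lemma princ_star: "x \<in> qf D \<Longrightarrow> x \<noteq> 0 \<Longrightarrow> star_ideal D st (princ D x)"
  unfolding star_ideal_def using princ_nz st_princ by blast

lemma princ_ftype: "x \<in> qf D \<Longrightarrow> x \<noteq> 0 \<Longrightarrow> finite_type D st (princ D x)"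
proof -
  assume "x \<in> qf D" "x \<noteq> 0"
  moreover have "fin_gen D (gen_submod D {x})" unfolding fin_gen_def by blast
  ultimately have "nz_frac D (gen_submod D {x}) \<and> fin_gen D (gen_submod D {x}) \<and> princ D x = st (gen_submod D {x})"
    unfolding gen_single using princ_nz st_princ by auto
  thus ?thesis unfolding finite_type_def by blast
qed

lemma proper_int_sub: "proper_int_star D st I \<Longrightarrow> 1 \<notin> I"
  unfolding proper_int_star_def star_ideal_def nz_frac_def frac_ideal_def using submod_one by blast

lemma proper_int_submod: "proper_int_star D st I \<Longrightarrow> submod D I"
  unfolding proper_int_star_def star_ideal_def nz_frac_def frac_ideal_def by blast

end


context sd begin

lemma fc_eq: "nz_frac D I \<Longrightarrow> st I = \<Union>{st J | J. J \<subseteq> I \<and> nz_frac D J \<and> fin_gen D J}"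
  using fc unfolding finite_character_def by blast

lemma chain_finite: "finite S \<Longrightarrow> C \<noteq> {} \<Longrightarrow> (\<forall>X\<in>C. \<forall>Y\<in>C. X \<subseteq> Y \<or> Y \<subseteq> X) \<Longrightarrow> S \<subseteq> \<Union>C \<Longrightarrow> \<exists>X\<in>C. S \<subseteq> X"
proof (induction S rule: finite_induct)
  case empty thus ?case by blast
next
  case (insert x S)
  then obtain X where X: "X \<in> C" "S \<subseteq> X" by blast
  obtain Y where Y: "Y \<in> C" "x \<in> Y" using insert.prems by blast
  show ?case using insert.prems(2) X Y by (metis insert_subset subset_iff)
qed

lemma max_exists: assumes "proper_int_star D st I" shows "\<exists>P. max_star D st P \<and> I \<subseteq> P"
proof -
  let ?A = "{J. proper_int_star D st J \<and> I \<subseteq> J}"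
  have "\<exists>M\<in>?A. \<forall>X\<in>?A. M \<subseteq> X \<longrightarrow> X = M"
  proof (rule subset_Zorn_nonempty)
    show "?A \<noteq> {}" using assms by blast
  next
    fix C assume C: "C \<noteq> {}" "subset.chain ?A C"
    hence CA: "C \<subseteq> ?A" and ch: "\<forall>X\<in>C. \<forall>Y\<in>C. X \<subseteq> Y \<or> Y \<subseteq> X" unfolding subset_chain_def by auto
    let ?U = "\<Union>C"
    obtain X0 where X0: "X0 \<in> C" using C by blast
    have IU: "I \<subseteq> ?U" using X0 CA by blast
    have UD: "?U \<subseteq> D" using CA unfolding proper_int_star_def by blast
    have sm: "\<And>X. X \<in> C \<Longrightarrow> submod D X" using CA proper_int_submod by blast
    have "submod D ?U" unfolding submod_def
    proof (intro conjI ballI)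
      show "0 \<in> ?U" using X0 sm submod_0 by blast
    next
      fix a b assume "a \<in> ?U" "b \<in> ?U"
      then obtain X Y where "X \<in> C" "Y \<in> C" "a \<in> X" "b \<in> Y" by blast
      thus "a + b \<in> ?U" using ch sm submod_add by (metis UnionI subset_iff)
    next
      fix d a assume "d \<in> D" "a \<in> ?U"
      then obtain X where "X \<in> C" "a \<in> X" by blast
      thus "d * a \<in> ?U" using sm submod_mult \<open>d \<in> D\<close> by blast
    qed
    moreover obtain z where "z \<in> I" "z \<noteq> 0" using assms nz_frac_ex unfolding proper_int_star_def star_ideal_def by blast
    hence "?U \<noteq> {0}" using IU by blast
    ultimately have nzU: "nz_frac D ?U" using nz_int UD by blast
    have "1 \<notin> ?U" using CA proper_int_sub by blast
    hence UneD: "?U \<noteq> D" by auto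
    have "st ?U \<subseteq> ?U"
    proof
      fix y assume "y \<in> st ?U"
      then obtain J where J: "y \<in> st J" "J \<subseteq> ?U" "nz_frac D J" "fin_gen D J" using fc_eq[OF nzU] by blast
      then obtain S where S: "finite S" "J = gen_submod D S" unfolding fin_gen_def by blast
      then obtain X where X: "X \<in> C" "S \<subseteq> X" using chain_finite[OF S(1) C(1) ch] J(2) gen_sub by blast
      have "J \<subseteq> X" using S X gen_least sm by blast
      moreover have "proper_int_star D st X" using X CA by blast
      ultimately have "st J \<subseteq> X" using st_mono[OF J(3)] unfolding proper_int_star_def star_ideal_def by blast
      thus "y \<in> ?U" using J X by blast
    qed
    hence "st ?U = ?U" using st_ext[OF nzU] by blast
    hence "proper_int_star D st ?U" unfolding proper_int_star_def star_ideal_def using nzU UD UneD by blast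
    thus "?U \<in> ?A" using IU by blast
  qed
  then obtain M where M: "proper_int_star D st M" "I \<subseteq> M" "\<forall>X\<in>?A. M \<subseteq> X \<longrightarrow> X = M" by blast
  have "max_star D st M" unfolding max_star_def using M by blast
  thus ?thesis using M by blast
qed

lemma max_proper: "max_star D st P \<Longrightarrow> proper_int_star D st P" unfolding max_star_def by blast
lemma max_sub: "max_star D st P \<Longrightarrow> P \<subseteq> D" unfolding max_star_def proper_int_star_def by blast
lemma max_submod: "max_star D st P \<Longrightarrow> submod D P" using max_proper proper_int_submod by blast
lemma max_nz: "max_star D st P \<Longrightarrow> nz_frac D P" unfolding max_star_def proper_int_star_def star_ideal_def by blast
lemma max_st: "max_star D st P \<Longrightarrow> st P = P" unfolding max_star_def proper_int_star_def star_ideal_def by blast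
lemma max_1: "max_star D st P \<Longrightarrow> 1 \<notin> P" using max_proper proper_int_sub by blast
lemma max_0: "max_star D st P \<Longrightarrow> 0 \<in> P" using max_submod submod_0 by blast
lemma max_unit: "max_star D st P \<Longrightarrow> x \<in> P \<Longrightarrow> \<not> is_unit_in D x"
  using submod_unit max_submod max_sub max_1 by (metis one)
lemma max_incomp: "max_star D st P \<Longrightarrow> max_star D st Q \<Longrightarrow> P \<subseteq> Q \<Longrightarrow> P = Q"
  unfolding max_star_def by blast

lemma max_prime: assumes P: "max_star D st P" and ab: "a \<in> D" "b \<in> D" "a * b \<in> P"
  shows "a \<in> P \<or> b \<in> P"
proof (rule ccontr)
  assume "\<not> (a \<in> P \<or> b \<in> P)"
  hence na: "a \<notin> P" and nb: "b \<notin> P" by auto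
  have a0: "a \<noteq> 0" using na max_0[OF P] by auto
  have b0: "b \<noteq> 0" using nb max_0[OF P] by auto
  let ?S = "ideal_sum P (princ D a)"
  have nzS: "nz_frac D ?S" using sum_nz max_nz[OF P] princ_nz[OF qf_D[OF ab(1)] a0] by blast
  have SD: "?S \<subseteq> D" using sum_least[OF submod_D] max_sub[OF P] princ_sub_D[OF ab(1)] by blast
  have "st ?S \<subseteq> D" using st_int nzS SD by blast
  have PS: "P \<subseteq> st ?S" using sum_left[OF princ_submod] st_ext[OF nzS] by blast
  have aS: "a \<in> st ?S" using sum_right[OF max_submod[OF P]] st_ext[OF nzS] princ_self by blast
  have "st ?S = D"
  proof (rule ccontr)
    assume "st ?S \<noteq> D"
    hence "proper_int_star D st (st ?S)" unfolding proper_int_star_def using st_star nzS \<open>st ?S \<subseteq> D\<close> by blast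
    hence "st ?S = P" using P PS unfolding max_star_def by blast
    thus False using aS na by blast
  qed
  have sub: "(*) b ` ?S \<subseteq> P"
  proof
    fix y assume "y \<in> (*) b ` ?S"
    then obtain p z where pz: "p \<in> P" "z \<in> princ D a" "y = b * (p + z)" unfolding ideal_sum_def by blast
    then obtain d where d: "d \<in> D" "z = a * d" unfolding princ_iff by blast
    have "y = b * p + d * (a * b)" using pz d by (simp add: algebra_simps)
    moreover have "b * p \<in> P" using submod_mult[OF max_submod[OF P] ab(2) pz(1)] .
    moreover have "d * (a * b) \<in> P" using submod_mult[OF max_submod[OF P] d(1) ab(3)] .
    ultimately show "y \<in> P" using submod_add[OF max_submod[OF P]] by simp
  qed
  have nzbS: "nz_frac D ((*) b ` ?S)" using scale_nz[OF qf_D[OF ab(2)] b0 nzS] .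
  have "st ((*) b ` ?S) \<subseteq> P" using st_mono[OF nzbS max_nz[OF P] sub] max_st[OF P] by simp
  moreover have "st ((*) b ` ?S) = (*) b ` D" using st_scale[OF qf_D[OF ab(2)] b0 nzS] \<open>st ?S = D\<close> by simp
  ultimately have "b * 1 \<in> P" using one by blast
  thus False using nb by simp
qed

lemma max_prime_ideal: "max_star D st P \<Longrightarrow> prime_ideal D P"
  unfolding prime_ideal_def using max_submod max_sub max_1 max_prime one by blast

lemma max_prime_list: "max_star D st P \<Longrightarrow> set xs \<subseteq> D \<Longrightarrow> prod_list xs \<in> P \<Longrightarrow> \<exists>x\<in>set xs. x \<in> P"
proof (induction xs)
  case Nil thus ?case using max_1 by simp
next
  case (Cons x xs)
  hence "x \<in> P \<or> prod_list xs \<in> P" using max_prime[of P x "prod_list xs"] prod_listD by simp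
  thus ?case using Cons by auto
qed

lemma max_not_prime_list: "max_star D st P \<Longrightarrow> set xs \<subseteq> D - P \<Longrightarrow> prod_list xs \<notin> P"
  using max_prime_list by blast


lemma homog_unique: assumes H: "star_homog D st I" and P: "max_star D st P" and Q: "max_star D st Q"
  and IP: "I \<subseteq> P" and IQ: "I \<subseteq> Q" shows "P = Q"
proof (rule ccontr)
  assume PQ: "P \<noteq> Q"
  obtain G where G: "nz_frac D G" "fin_gen D G" "I = st G"
    using H unfolding star_homog_def finite_type_def by blast
  then obtain T where T: "finite T" "G = gen_submod D T" unfolding fin_gen_def by blast
  have TI: "T \<subseteq> I" using T G gen_sub st_ext by blast
  let ?W = "ideal_sum P Q"
  have nzW: "nz_frac D ?W" using sum_nz max_nz P Q by blast
  have WD: "?W \<subseteq> D" using sum_least[OF submod_D] max_sub P Q by blast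
  have sWD: "st ?W \<subseteq> D" using st_int nzW WD by blast
  have PW: "P \<subseteq> st ?W" using sum_left[OF max_submod[OF Q]] st_ext[OF nzW] by blast
  have QW: "Q \<subseteq> st ?W" using sum_right[OF max_submod[OF P]] st_ext[OF nzW] by blast
  have "st ?W = D"
  proof (rule ccontr)
    assume "st ?W \<noteq> D"
    hence "proper_int_star D st (st ?W)" unfolding proper_int_star_def using st_star nzW sWD by blast
    hence "st ?W = P" using P PW unfolding max_star_def by blast
    hence "Q \<subseteq> P" using QW by blast
    thus False using max_incomp[OF Q P] PQ by blast
  qed
  hence "1 \<in> st ?W" by simp
  then obtain J where J: "1 \<in> st J" "J \<subseteq> ?W" "nz_frac D J" "fin_gen D J" using fc_eq[OF nzW] by blast
  then obtain S where S: "finite S" "J = gen_submod D S" unfolding fin_gen_def by blast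
  have "\<forall>s\<in>S. \<exists>p q. p \<in> P \<and> q \<in> Q \<and> s = p + q" using J(2) S gen_sub unfolding ideal_sum_def by blast
  then obtain fp fq where f: "\<forall>s\<in>S. fp s \<in> P \<and> fq s \<in> Q \<and> s = fp s + fq s" by metis
  have mk: "\<And>R f. max_star D st R \<Longrightarrow> I \<subseteq> R \<Longrightarrow> f ` S \<subseteq> R \<Longrightarrow>
      proper_int_star D st (st (gen_submod D (T \<union> f ` S))) \<and> finite_type D st (st (gen_submod D (T \<union> f ` S)))
      \<and> I \<subseteq> st (gen_submod D (T \<union> f ` S)) \<and> f ` S \<subseteq> st (gen_submod D (T \<union> f ` S))"
  proof -
    fix R f assume R: "max_star D st R" "I \<subseteq> R" "f ` S \<subseteq> R"
    let ?G = "gen_submod D (T \<union> f ` S)"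
    have "T \<union> f ` S \<subseteq> R" using R TI by blast
    hence GR: "?G \<subseteq> R" using gen_least[OF max_submod[OF R(1)]] by blast
    have GG: "G \<subseteq> ?G" using T gen_mono by blast
    obtain g where "g \<in> G" "g \<noteq> 0" using G(1) nz_frac_ex by blast
    hence "?G \<noteq> {0}" using GG by blast
    moreover have "?G \<subseteq> D" using GR max_sub[OF R(1)] by blast
    ultimately have nzG: "nz_frac D ?G" using nz_int[OF gen_is_submod] by blast
    have sGR: "st ?G \<subseteq> R" using st_mono[OF nzG max_nz[OF R(1)] GR] max_st[OF R(1)] by simp
    have "st ?G \<noteq> D" using sGR max_1[OF R(1)] one by blast
    hence c1: "proper_int_star D st (st ?G)"
      unfolding proper_int_star_def using st_star[OF nzG] sGR max_sub[OF R(1)] by blast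
    have "finite (T \<union> f ` S)" using T S by blast
    hence "fin_gen D ?G" unfolding fin_gen_def by blast
    hence "finite_type D st (st ?G)" unfolding finite_type_def using nzG by blast
    moreover note c1
    moreover have "I \<subseteq> st ?G" using G(3) st_mono[OF G(1) nzG GG] by blast
    moreover have "f ` S \<subseteq> st ?G" using gen_sub[of "T \<union> f ` S"] st_ext[OF nzG] by blast
    ultimately show "proper_int_star D st (st ?G) \<and> finite_type D st (st ?G) \<and> I \<subseteq> st ?G \<and> f ` S \<subseteq> st ?G" by blast
  qed
  have fpS: "fp ` S \<subseteq> P" and fqS: "fq ` S \<subseteq> Q" using f by auto
  define A where "A = st (gen_submod D (T \<union> fp ` S))"
  define B where "B = st (gen_submod D (T \<union> fq ` S))"
  have A: "proper_int_star D st A" "finite_type D st A" "I \<subseteq> A" "fp ` S \<subseteq> A"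
    using mk[OF P IP fpS] unfolding A_def by auto
  have B: "proper_int_star D st B" "finite_type D st B" "I \<subseteq> B" "fq ` S \<subseteq> B"
    using mk[OF Q IQ fqS] unfolding B_def by auto
  have ne: "st (ideal_sum A B) \<noteq> D" using H A B unfolding star_homog_def by blast
  have smA: "submod D A" and smB: "submod D B" using A(1) B(1) proper_int_submod by auto
  have "S \<subseteq> ideal_sum A B"
  proof
    fix s assume "s \<in> S"
    thus "s \<in> ideal_sum A B" using f A(4) B(4) unfolding ideal_sum_def by blast
  qed
  hence JS: "J \<subseteq> ideal_sum A B" using S gen_least[OF sum_submod[OF smA smB]] by blast
  have ABD: "ideal_sum A B \<subseteq> D" using sum_least[OF submod_D] A(1) B(1) unfolding proper_int_star_def by blast
  have nzAB: "nz_frac D (ideal_sum A B)" using sum_nz A(1) B(1) unfolding proper_int_star_def star_ideal_def by blast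
  have "1 \<in> st (ideal_sum A B)" using st_mono[OF J(3) nzAB JS] J(1) by blast
  moreover have "st (ideal_sum A B) \<subseteq> D" using st_int nzAB ABD by blast
  ultimately have "st (ideal_sum A B) = D" using submod_one st_submod[OF nzAB] by blast
  thus False using ne by blast
qed

lemma M_of_eq: "star_homog D st I \<Longrightarrow> max_star D st P \<Longrightarrow> I \<subseteq> P \<Longrightarrow> M_of D st I = P"
  unfolding M_of_def using homog_unique by (intro the_equality) auto

end


context dom begin

lemma prime_sub: "prime_ideal D Q \<Longrightarrow> Q \<subseteq> D" unfolding prime_ideal_def by blast
lemma prime_submod: "prime_ideal D Q \<Longrightarrow> submod D Q" unfolding prime_ideal_def by blast
lemma prime_1: "prime_ideal D Q \<Longrightarrow> 1 \<notin> Q" unfolding prime_ideal_def using submod_one by blast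
lemma prime_0: "prime_ideal D Q \<Longrightarrow> 0 \<in> Q" using prime_submod submod_0 by blast
lemma prime_mult: "prime_ideal D Q \<Longrightarrow> a \<in> D \<Longrightarrow> b \<in> D \<Longrightarrow> a * b \<in> Q \<Longrightarrow> a \<in> Q \<or> b \<in> Q"
  unfolding prime_ideal_def by blast
lemma prime_unit: "prime_ideal D Q \<Longrightarrow> is_unit_in D u \<Longrightarrow> u \<notin> Q"
  using submod_unit prime_submod prime_sub unfolding prime_ideal_def by blast
lemma prime_list: "prime_ideal D Q \<Longrightarrow> set xs \<subseteq> D \<Longrightarrow> prod_list xs \<in> Q \<Longrightarrow> \<exists>x\<in>set xs. x \<in> Q"
proof (induction xs)
  case Nil thus ?case using prime_1 by simp
next
  case (Cons x xs)
  hence "x \<in> Q \<or> prod_list xs \<in> Q" using prime_mult[of Q x "prod_list xs"] prod_listD by simp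
  thus ?case using Cons by auto
qed
lemma prime_power: "prime_ideal D Q \<Longrightarrow> z \<in> D \<Longrightarrow> z ^ n \<in> Q \<Longrightarrow> z \<in> Q"
proof (induction n)
  case 0 thus ?case using prime_1 by simp
next
  case (Suc n)
  thus ?case using prime_mult[of Q z "z^n"] power by auto
qed
lemma prime_notin_mult: "prime_ideal D Q \<Longrightarrow> a \<in> D \<Longrightarrow> b \<in> D \<Longrightarrow> a \<notin> Q \<Longrightarrow> b \<notin> Q \<Longrightarrow> a * b \<notin> Q"
  using prime_mult by blast

lemma loc_iff: "x \<in> loc D P \<longleftrightarrow> (\<exists>a s. a \<in> D \<and> s \<in> D \<and> s \<notin> P \<and> x = a / s)"
  unfolding loc_def by blast
lemma locI: "a \<in> D \<Longrightarrow> s \<in> D \<Longrightarrow> s \<notin> P \<Longrightarrow> a / s \<in> loc D P"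
  unfolding loc_def by blast
lemma D_loc: "prime_ideal D P \<Longrightarrow> a \<in> D \<Longrightarrow> a \<in> loc D P"
  using locI[of a 1 P] prime_1 by simp
lemma loc_nz: "prime_ideal D P \<Longrightarrow> s \<notin> P \<Longrightarrow> s \<noteq> 0"
  using prime_0 by blast
lemma loc_mult: "prime_ideal D P \<Longrightarrow> x \<in> loc D P \<Longrightarrow> y \<in> loc D P \<Longrightarrow> x * y \<in> loc D P"
proof -
  assume P: "prime_ideal D P" and "x \<in> loc D P" "y \<in> loc D P"
  then obtain a s b t where h: "a \<in> D" "s \<in> D" "s \<notin> P" "x = a / s" "b \<in> D" "t \<in> D" "t \<notin> P" "y = b / t"
    unfolding loc_iff by blast
  have "x * y = (a * b) / (s * t)" using h by simp
  moreover have "s * t \<notin> P" using prime_notin_mult[OF P] h by blast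
  ultimately show ?thesis using locI h by (simp add: mult)
qed
lemma loc_add: "prime_ideal D P \<Longrightarrow> x \<in> loc D P \<Longrightarrow> y \<in> loc D P \<Longrightarrow> x + y \<in> loc D P"
proof -
  assume P: "prime_ideal D P" and "x \<in> loc D P" "y \<in> loc D P"
  then obtain a s b t where h: "a \<in> D" "s \<in> D" "s \<notin> P" "x = a / s" "b \<in> D" "t \<in> D" "t \<notin> P" "y = b / t"
    unfolding loc_iff by blast
  have "s \<noteq> 0" "t \<noteq> 0" using h loc_nz[OF P] by auto
  hence "x + y = (a * t + b * s) / (s * t)" using h by (simp add: field_simps)
  moreover have "s * t \<notin> P" using prime_notin_mult[OF P] h by blast
  ultimately show ?thesis using locI h by (simp add: mult add)
qed
lemma loc_uminus: "prime_ideal D P \<Longrightarrow> x \<in> loc D P \<Longrightarrow> - x \<in> loc D P"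
  using loc_mult[of P "-1" x] D_loc[of P "-1"] uminus[OF one] by simp
lemma loc_subring: "prime_ideal D P \<Longrightarrow> subring (loc D P)"
  unfolding subring_def using D_loc loc_add loc_mult loc_uminus
  by (metis diff_conv_add_uminus one zero)
lemma loc_qf: "x \<in> loc D P \<Longrightarrow> x \<in> qf D"
  unfolding loc_iff using qfI by (metis divide_eq_0_iff qf_zero)
lemma qf_loc: "prime_ideal D P \<Longrightarrow> qf (loc D P) \<subseteq> qf D"
proof
  fix x assume "x \<in> qf (loc D P)"
  then obtain u v where "u \<in> loc D P" "v \<in> loc D P" "x = u / v" unfolding qf_def by blast
  thus "x \<in> qf D" using loc_qf qf_divide by blast
qed
lemma qf_in_loc: "prime_ideal D P \<Longrightarrow> x \<in> qf D \<Longrightarrow> x \<in> qf (loc D P)"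
proof -
  assume P: "prime_ideal D P" and x: "x \<in> qf D"
  obtain a b where "a \<in> D" "b \<in> D" "b \<noteq> 0" "x = a / b" using qfE[OF x] by metis
  thus ?thesis unfolding qf_def using D_loc[OF P] by blast
qed

definition coprime_in :: "'k \<Rightarrow> 'k \<Rightarrow> bool" where
  "coprime_in a b \<longleftrightarrow> (\<forall>e\<in>D. dvd_in D e a \<longrightarrow> dvd_in D e b \<longrightarrow> is_unit_in D e)"

lemma dvd_in_mult_right: "dvd_in D a b \<Longrightarrow> c \<in> D \<Longrightarrow> dvd_in D a (b * c)"
  unfolding dvd_in_def by (metis mult mult.assoc)
lemma dvd_in_mult_left: "dvd_in D a b \<Longrightarrow> c \<in> D \<Longrightarrow> dvd_in D a (c * b)"
  using dvd_in_mult_right by (metis mult.commute)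
lemma dvd_in_cancel: "c \<noteq> 0 \<Longrightarrow> dvd_in D (c * a) (c * b) \<Longrightarrow> dvd_in D a b"
  unfolding dvd_in_def by (metis mult.assoc mult_left_cancel)
lemma dvd_in_mono: "dvd_in D a b \<Longrightarrow> c \<in> D \<Longrightarrow> dvd_in D (c * a) (c * b)"
  unfolding dvd_in_def by (metis mult.assoc)
lemma dvd_in_unit: "dvd_in D a 1 \<Longrightarrow> a \<in> D \<Longrightarrow> is_unit_in D a"
  unfolding dvd_in_def is_unit_in_def by metis
lemma dvd_in_0: "dvd_in D a 0" unfolding dvd_in_def by (metis mult_zero_right zero)
lemma dvd_in_zero: "dvd_in D 0 a \<Longrightarrow> a = 0" unfolding dvd_in_def by simp

lemma prod_list_dvd: "set ys \<subseteq> D \<Longrightarrow> y \<in> set ys \<Longrightarrow> dvd_in D y (prod_list ys)"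
proof (induction ys)
  case Nil thus ?case by simp
next
  case (Cons z ys)
  show ?case
  proof (cases "y = z")
    case True thus ?thesis using Cons.prems prod_listD unfolding dvd_in_def by auto
  next
    case False
    hence "dvd_in D y (prod_list ys)" using Cons by auto
    thus ?thesis using dvd_in_mult_left Cons.prems by auto
  qed
qed

lemma gcd_reduce: assumes G: "gcd_domain D" and ab: "a \<in> D" "b \<in> D" "a \<noteq> 0" "b \<noteq> 0"
  shows "\<exists>g a' b'. g \<in> D \<and> a' \<in> D \<and> b' \<in> D \<and> g \<noteq> 0 \<and> a = g * a' \<and> b = g * b' \<and> coprime_in a' b'"
proof -
  obtain g where g: "g \<in> D" "dvd_in D g a" "dvd_in D g b"
    "\<forall>e\<in>D. dvd_in D e a \<longrightarrow> dvd_in D e b \<longrightarrow> dvd_in D e g" using G ab unfolding gcd_domain_def by blast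
  obtain a' b' where a': "a' \<in> D" "a = g * a'" and b': "b' \<in> D" "b = g * b'" using g unfolding dvd_in_def by blast
  have g0: "g \<noteq> 0" using a' ab by auto
  have "coprime_in a' b'" unfolding coprime_in_def
  proof (intro ballI impI)
    fix e assume e: "e \<in> D" "dvd_in D e a'" "dvd_in D e b'"
    have "dvd_in D (g * e) a" "dvd_in D (g * e) b" using dvd_in_mono[OF e(2) g(1)] dvd_in_mono[OF e(3) g(1)] a' b' by auto
    hence "dvd_in D (g * e) (g * 1)" using g(4) mult[OF g(1) e(1)] by simp
    hence "dvd_in D e 1" using dvd_in_cancel g0 by blast
    thus "is_unit_in D e" using dvd_in_unit e by blast
  qed
  thus ?thesis using g a' b' g0 by blast
qed

lemma euclid: assumes G: "gcd_domain D" and ab: "a \<in> D" "b \<in> D" "a \<noteq> 0" "b \<noteq> 0" "coprime_in a b"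
  and s: "s \<in> D" and d: "dvd_in D b (s * a)" shows "dvd_in D b s"
proof (cases "s = 0")
  case True thus ?thesis using dvd_in_0 by simp
next
  case False
  obtain g where g: "g \<in> D" "dvd_in D g (s * a)" "dvd_in D g (s * b)"
    "\<forall>e\<in>D. dvd_in D e (s * a) \<longrightarrow> dvd_in D e (s * b) \<longrightarrow> dvd_in D e g"
    using G ab s False mult unfolding gcd_domain_def by (metis no_zero_divisors)
  have "dvd_in D s (s * a)" "dvd_in D s (s * b)" using ab s unfolding dvd_in_def by auto
  hence "dvd_in D s g" using g(4) s by blast
  then obtain k where k: "k \<in> D" "g = s * k" unfolding dvd_in_def by blast
  have "dvd_in D k a" using dvd_in_cancel[OF False] g(2) k by simp
  moreover have "dvd_in D k b" using dvd_in_cancel[OF False] g(3) k by simp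
  ultimately have ku: "is_unit_in D k" using ab(5) k(1) unfolding coprime_in_def by blast
  have "dvd_in D b (s * b)" using s ab dvd_in_refl dvd_in_mult_left by blast
  hence "dvd_in D b g" using g(4) d ab by blast
  then obtain c where c0: "c \<in> D" "g = b * c" unfolding dvd_in_def by blast
  have c: "c \<in> D" "s * k = b * c" using c0 k by auto
  obtain k' where k': "k' \<in> D" "k * k' = 1" using ku unfolding is_unit_in_def by blast
  have "s = s * (k * k')" using k' by simp
  also have "\<dots> = b * (c * k')" using c(2) by (metis mult.assoc)
  finally have "s = b * (c * k')" .
  moreover have "c * k' \<in> D" using c k' by (simp add: mult)
  ultimately show ?thesis unfolding dvd_in_def by blast
qed

end


context dom begin

lemma fin_choice: "\<forall>i<(n::nat). \<exists>d. P i d \<Longrightarrow> \<exists>f. \<forall>i<n. P i (f i)"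
  by metis

lemma ideal_prod_princ: "ideal_prod (princ D a) (princ D b) = princ D (a * b)"
proof
  show "ideal_prod (princ D a) (princ D b) \<subseteq> princ D (a * b)"
  proof
    fix x assume "x \<in> ideal_prod (princ D a) (princ D b)"
    then obtain n A B where h: "\<forall>i<(n::nat). A i \<in> princ D a \<and> B i \<in> princ D b" "x = (\<Sum>i<n. A i * B i)"
      unfolding ideal_prod_def by blast
    have "\<forall>i<n. \<exists>d. d \<in> D \<and> A i = a * d" using h(1) unfolding princ_iff by blast
    from fin_choice[OF this] obtain f where f: "\<forall>i<n. f i \<in> D \<and> A i = a * f i" by blast
    have "\<forall>i<n. \<exists>d. d \<in> D \<and> B i = b * d" using h(1) unfolding princ_iff by blast
    from fin_choice[OF this] obtain g where g: "\<forall>i<n. g i \<in> D \<and> B i = b * g i" by blast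
    have "x = (\<Sum>i<n. (a * b) * (f i * g i))" unfolding h(2) using f g by (intro sum.cong) (auto simp: algebra_simps)
    also have "\<dots> = (a * b) * (\<Sum>i<n. f i * g i)" by (simp add: sum_distrib_left)
    moreover have "(\<Sum>i<n. f i * g i) \<in> D" using f g by (intro sumD) (simp add: mult)
    ultimately show "x \<in> princ D (a * b)" using princ_mem by simp
  qed
next
  show "princ D (a * b) \<subseteq> ideal_prod (princ D a) (princ D b)"
  proof
    fix x assume "x \<in> princ D (a * b)"
    then obtain d where d: "d \<in> D" "x = a * b * d" unfolding princ_iff by blast
    have "x = (\<Sum>i<(1::nat). (a * d) * b)" using d by (simp add: algebra_simps)
    moreover have "\<forall>i<(1::nat). a * d \<in> princ D a \<and> b \<in> princ D b" using d princ_mem princ_self by blast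
    ultimately show "x \<in> ideal_prod (princ D a) (princ D b)" unfolding ideal_prod_def
      by (intro CollectI exI[of _ 1] exI[of _ "\<lambda>_. a * d"] exI[of _ "\<lambda>_. b"]) simp
  qed
qed

lemma ideal_prod_list_princ: "ideal_prod_list D (map (princ D) ys) = princ D (prod_list ys)"
  unfolding ideal_prod_list_def by (induction ys) (auto simp: ideal_prod_princ)

end

context sd begin

lemma pair_nz: "a \<in> qf D \<Longrightarrow> b \<in> qf D \<Longrightarrow> a \<noteq> 0 \<Longrightarrow> nz_frac D (gen_submod D {a, b})"
  using gen_nz[of "{a,b}" a] by auto

lemma star_euclid: assumes ab: "a \<in> D" "b \<in> D" "a \<noteq> 0" and one: "st (gen_submod D {a, b}) = D"
  and c: "c \<in> D" and d: "dvd_in D a (b * c)" shows "dvd_in D a c"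
proof (cases "c = 0")
  case True thus ?thesis using dvd_in_0 by simp
next
  case False
  have nz: "nz_frac D (gen_submod D {a, b})" using pair_nz qf_D ab by blast
  have img: "(*) c ` gen_submod D {a, b} = gen_submod D {c * a, c * b}" using gen_scale by simp
  have "c * a \<in> princ D a" using princ_mem[OF c, of a] by (simp add: mult.commute)
  moreover have "c * b \<in> princ D a" using d princ_dvd[of "b*c" a] by (simp add: mult.commute)
  ultimately have "{c * a, c * b} \<subseteq> princ D a" by blast
  hence sub: "(*) c ` gen_submod D {a, b} \<subseteq> princ D a" unfolding img using gen_least princ_submod by blast
  have nzc: "nz_frac D ((*) c ` gen_submod D {a, b})" using scale_nz[OF qf_D[OF c] False nz] .
  have "st ((*) c ` gen_submod D {a, b}) \<subseteq> princ D a" using st_sub_princ[OF nzc qf_D[OF ab(1)] ab(3) sub] .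
  moreover have "st ((*) c ` gen_submod D {a, b}) = (*) c ` D" using st_scale[OF qf_D[OF c] False nz] one by simp
  ultimately have "c * 1 \<in> princ D a" using dom.one dom_axioms by blast
  thus ?thesis unfolding princ_dvd by simp
qed

lemma lcm_from_pair: assumes ab: "a \<in> D" "b \<in> D" "a \<noteq> 0" "b \<noteq> 0"
  and dd: "st (gen_submod D {a, b}) = princ D d" shows "\<exists>m. princ D a \<inter> princ D b = princ D m"
proof -
  have nz: "nz_frac D (gen_submod D {a, b})" using pair_nz qf_D ab by blast
  have aS: "a \<in> princ D d" and bS: "b \<in> princ D d" using gen_sub[of "{a,b}"] st_ext[OF nz] dd by auto
  have "{a, b} \<subseteq> D" using ab by blast
  hence "gen_submod D {a, b} \<subseteq> D" using gen_least[OF submod_D] by blast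
  hence "princ D d \<subseteq> D" using st_int[OF nz] dd by simp
  hence dD: "d \<in> D" using princ_self[of d] by blast
  obtain a' where a': "a' \<in> D" "a = d * a'" using aS princ_iff by blast
  obtain b' where b': "b' \<in> D" "b = d * b'" using bS princ_iff by blast
  have d0: "d \<noteq> 0" and a0: "a' \<noteq> 0" and b0: "b' \<noteq> 0" using a' b' ab by auto
  have nz': "nz_frac D (gen_submod D {a', b'})" using pair_nz qf_D a' b' a0 by blast
  have "gen_submod D {a, b} = (*) d ` gen_submod D {a', b'}" using gen_scale a' b' by simp
  hence "(*) d ` st (gen_submod D {a', b'}) = princ D d" using st_scale[OF qf_D[OF dD] d0 nz'] dd by simp
  also have "princ D d = (*) d ` D" using princ_image[of d 1] by simp
  finally have one: "st (gen_submod D {a', b'}) = D"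
    using d0 by (simp add: inj_image_eq_iff inj_on_def)
  have "princ D a \<inter> princ D b = princ D (a * b')"
  proof
    show "princ D (a * b') \<subseteq> princ D a \<inter> princ D b"
    proof -
      have "a * b' \<in> princ D a" using princ_mem[OF b'(1)] by blast
      hence 1: "princ D (a * b') \<subseteq> princ D a" using princ_least[OF princ_submod] by blast
      have "a * b' = b * a'" using a' b' by simp
      hence "a * b' \<in> princ D b" using princ_mem[OF a'(1), of b] by simp
      hence 2: "princ D (a * b') \<subseteq> princ D b" using princ_least[OF princ_submod] by blast
      show ?thesis using 1 2 by blast
    qed
  next
    show "princ D a \<inter> princ D b \<subseteq> princ D (a * b')"
    proof
      fix c assume c: "c \<in> princ D a \<inter> princ D b"
      obtain s where s: "s \<in> D" "c = a * s" using c princ_iff by blast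
      obtain t where t: "t \<in> D" "c = b * t" using c princ_iff by blast
      have "d * (a' * s) = d * (b' * t)" using s(2) t(2) a'(2) b'(2) by (metis mult.assoc)
      hence e: "a' * s = b' * t" using d0 by simp
      have "dvd_in D a' (b' * t)" using e s unfolding dvd_in_def by metis
      hence "dvd_in D a' t" using star_euclid[OF a'(1) b'(1) a0 one t(1)] by blast
      then obtain t' where "t' \<in> D" "t = a' * t'" unfolding dvd_in_def by blast
      hence "c = a * b' * t'" using t a' b' by (simp add: algebra_simps)
      thus "c \<in> princ D (a * b')" using \<open>t' \<in> D\<close> princ_mem by blast
    qed
  qed
  thus ?thesis by blast
qed

end



locale sd1 = sd +
  assumes H1: "\<forall>x\<in>D. x \<noteq> 0 \<longrightarrow> \<not> is_unit_in D x \<longrightarrow>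
            (\<exists>Is. (\<forall>I\<in>set Is. fhomog_type1 D st I) \<and> princ D x = st (ideal_prod_list D Is))"
begin

definition good where "good y \<longleftrightarrow> y \<in> D \<and> fhomog_type1 D st (princ D y)"

lemma fhomog_princ: assumes "fhomog_type1 D st I"
  shows "\<exists>y. I = princ D y \<and> good y"
proof -
  have H: "star_homog D st I" and F: "\<forall>J. star_ideal D st J \<longrightarrow> finite_type D st J \<longrightarrow> I \<subseteq> J \<longrightarrow> (\<exists>y. J = princ D y)"
    using assms unfolding fhomog_type1_def star_fhomog_def by blast+
  have P: "proper_int_star D st I" "finite_type D st I" using H unfolding star_homog_def by blast+
  then obtain y where y: "I = princ D y" using F unfolding proper_int_star_def by blast
  have "y \<in> D" using y P(1) princ_self unfolding proper_int_star_def by blast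
  thus ?thesis using y assms unfolding good_def by blast
qed

lemma good_D: "good y \<Longrightarrow> y \<in> D" unfolding good_def by blast
lemma good_homog: "good y \<Longrightarrow> star_homog D st (princ D y)"
  unfolding good_def fhomog_type1_def star_fhomog_def by blast
lemma good_proper: "good y \<Longrightarrow> proper_int_star D st (princ D y)"
  using good_homog unfolding star_homog_def by blast
lemma good_nz: "good y \<Longrightarrow> y \<noteq> 0"
  using good_proper unfolding proper_int_star_def star_ideal_def nz_frac_def by fastforce
lemma good_nonunit: "good y \<Longrightarrow> \<not> is_unit_in D y"
proof
  assume "good y" "is_unit_in D y"
  hence "princ D y = D" using princ_unit[of y 1] by simp
  thus False using good_proper[OF \<open>good y\<close>] unfolding proper_int_star_def by blast
qed
lemma good_ex_max: "good y \<Longrightarrow> \<exists>P. max_star D st P \<and> y \<in> P"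
  using max_exists[OF good_proper] princ_self by blast
lemma good_unique: "good y \<Longrightarrow> max_star D st P \<Longrightarrow> max_star D st Q \<Longrightarrow> y \<in> P \<Longrightarrow> y \<in> Q \<Longrightarrow> P = Q"
  using homog_unique[OF good_homog] princ_least max_submod by metis
lemma good_M: "good y \<Longrightarrow> max_star D st P \<Longrightarrow> y \<in> P \<Longrightarrow> M_of D st (princ D y) = P"
  using M_of_eq[OF good_homog] princ_least max_submod by metis
lemma good_type1: assumes "good y" "max_star D st P" "y \<in> P" "z \<in> P" "z \<noteq> 0"
  shows "\<exists>n. z ^ n \<in> princ D y"
proof -
  have "homog_type1 D st (princ D y)" using assms(1) unfolding good_def fhomog_type1_def by blast
  then obtain n where n: "((*) (z ^ n) ` loc D P) \<inter> D \<subseteq> princ D y"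
    using good_M[OF assms(1-3)] assms(4,5) unfolding homog_type1_def by metis
  have "z ^ n \<in> D" using max_sub[OF assms(2)] assms(4) power by blast
  moreover have "z ^ n \<in> (*) (z ^ n) ` loc D P" using D_loc[OF max_prime_ideal[OF assms(2)] one] by force
  ultimately show ?thesis using n by blast
qed
lemma good_pair: assumes "good y" "b \<in> D" "b \<noteq> 0" shows "\<exists>d. st (gen_submod D {y, b}) = princ D d"
proof -
  have F: "\<forall>J. star_ideal D st J \<longrightarrow> finite_type D st J \<longrightarrow> princ D y \<subseteq> J \<longrightarrow> (\<exists>d. J = princ D d)"
    using assms(1) unfolding good_def fhomog_type1_def star_fhomog_def by blast
  have nz: "nz_frac D (gen_submod D {y, b})" using pair_nz qf_D good_D good_nz assms by blast
  have "star_ideal D st (st (gen_submod D {y, b}))" using st_star nz by blast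
  moreover have "fin_gen D (gen_submod D {y, b})" unfolding fin_gen_def by (intro exI[of _ "{y,b}"]) simp
  hence "finite_type D st (st (gen_submod D {y, b}))" unfolding finite_type_def using nz by blast
  moreover have "y \<in> st (gen_submod D {y, b})" using gen_sub[of "{y,b}"] st_ext[OF nz] by blast
  hence "princ D y \<subseteq> st (gen_submod D {y, b})" using princ_least st_submod[OF nz] by blast
  ultimately show ?thesis using F by blast
qed

lemma decomp: assumes x: "x \<in> D" "x \<noteq> 0"
  shows "\<exists>u ys. is_unit_in D u \<and> (\<forall>y\<in>set ys. good y) \<and> x = u * prod_list ys"
proof (cases "is_unit_in D x")
  case True thus ?thesis by (intro exI[of _ x] exI[of _ "[]"]) simp
next
  case False
  then obtain Is where Is: "\<forall>I\<in>set Is. fhomog_type1 D st I" "princ D x = st (ideal_prod_list D Is)"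
    using H1 x by blast
  define f where "f I = (SOME y. I = princ D y \<and> good y)" for I
  have f: "\<forall>I\<in>set Is. I = princ D (f I) \<and> good (f I)"
    using Is(1) fhomog_princ unfolding f_def by (metis (mono_tags, lifting) someI_ex)
  define ys where "ys = map f Is"
  have "Is = map (princ D) ys" unfolding ys_def using f by (induction Is) auto
  hence "princ D x = st (princ D (prod_list ys))" using Is(2) ideal_prod_list_princ by simp
  moreover have gy: "\<forall>y\<in>set ys. good y" using f unfolding ys_def by auto
  have "set ys \<subseteq> D" using gy good_D by blast
  hence "prod_list ys \<in> D" by blast
  moreover have "prod_list ys \<noteq> 0" using gy good_nz by (metis prod_list_zero_iff)
  ultimately have "princ D x = princ D (prod_list ys)" using st_princ qf_D by simp
  then obtain u where "is_unit_in D u" "x = prod_list ys * u" using princ_eq_imp x by blast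
  thus ?thesis using gy by (intro exI[of _ u] exI[of _ ys]) (simp add: mult.commute)
qed

lemma factor_in_prime: assumes Q: "prime_ideal D Q" and x: "x \<in> D" "x \<noteq> 0" "x \<in> Q"
  shows "\<exists>y. good y \<and> y \<in> Q \<and> dvd_in D y x"
proof -
  obtain u ys where d: "is_unit_in D u" "\<forall>y\<in>set ys. good y" "x = u * prod_list ys" using decomp x by blast
  have sD: "set ys \<subseteq> D" using d good_D by blast
  have "u \<notin> Q" using prime_unit[OF Q d(1)] .
  hence "prod_list ys \<in> Q" using prime_mult[OF Q] d(1) prod_listD[OF sD] x(3) d(3)
    unfolding is_unit_in_def by blast
  then obtain y where y: "y \<in> set ys" "y \<in> Q" using prime_list[OF Q sD] by blast
  have "dvd_in D y x" using prod_list_dvd[OF sD y(1)] d(1) d(3) dvd_in_mult_left unfolding is_unit_in_def by simp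
  thus ?thesis using y d by blast
qed

end


context sd1 begin

definition lcm_el where "lcm_el a \<longleftrightarrow> (\<forall>b\<in>D. b \<noteq> 0 \<longrightarrow> (\<exists>m. princ D a \<inter> princ D b = princ D m))"

lemma lcm_good: "good y \<Longrightarrow> lcm_el y"
  unfolding lcm_el_def
proof (intro ballI impI)
  fix b assume "good y" "b \<in> D" "b \<noteq> 0"
  then obtain d where "st (gen_submod D {y, b}) = princ D d" using good_pair by blast
  thus "\<exists>m. princ D y \<inter> princ D b = princ D m"
    using lcm_from_pair[OF good_D[OF \<open>good y\<close>] \<open>b \<in> D\<close> good_nz[OF \<open>good y\<close>] \<open>b \<noteq> 0\<close>] by blast
qed

lemma lcm_unit: "is_unit_in D u \<Longrightarrow> lcm_el u"
proof -
  assume "is_unit_in D u"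
  hence "princ D u = D" using princ_unit[of u 1] by simp
  thus ?thesis unfolding lcm_el_def using princ_sub_D by blast
qed

lemma lcm_mult: assumes a: "a \<in> D" "a \<noteq> 0" "lcm_el a" and b: "b \<in> D" "b \<noteq> 0" "lcm_el b"
  shows "lcm_el (a * b)"
  unfolding lcm_el_def
proof (intro ballI impI)
  fix c assume c: "c \<in> D" "c \<noteq> 0"
  obtain m where m: "princ D a \<inter> princ D c = princ D m" using a c unfolding lcm_el_def by blast
  have "a * c \<in> princ D a" "a * c \<in> princ D c" using princ_mem[OF c(1), of a] princ_mem[OF a(1), of c]
    by (auto simp: mult.commute)
  hence ac: "a * c \<in> princ D m" using m by blast
  have m0: "m \<noteq> 0" using ac a c by auto
  have "m \<in> princ D a" using m princ_self by blast
  then obtain k where k: "k \<in> D" "m = a * k" unfolding princ_iff by blast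
  have k0: "k \<noteq> 0" using k m0 by auto
  obtain n where n: "princ D b \<inter> princ D k = princ D n" using b k k0 unfolding lcm_el_def by blast
  have "princ D (a * b) \<inter> princ D c = princ D (a * n)"
  proof
    show "princ D (a * b) \<inter> princ D c \<subseteq> princ D (a * n)"
    proof
      fix z assume z: "z \<in> princ D (a * b) \<inter> princ D c"
      obtain v where v: "v \<in> D" "z = a * b * v" using z princ_iff by blast
      have "z \<in> princ D a" using v princ_mem[of "b * v" a] b(1) by (simp add: mult mult.assoc)
      hence "z \<in> princ D m" using z m by blast
      then obtain w where w: "w \<in> D" "z = m * w" using princ_iff by blast
      have "a * (k * w) = a * (b * v)" using v w k by (simp add: mult.assoc)
      hence e: "k * w = b * v" using a(2) by simp
      have "k * w \<in> princ D b \<inter> princ D k" using e princ_mem[OF v(1), of b] princ_mem[OF w(1), of k] by simp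
      hence "k * w \<in> princ D n" using n by blast
      then obtain r where r: "r \<in> D" "k * w = n * r" using princ_iff by blast
      have "z = a * n * r" using w k r by (simp add: mult.assoc)
      thus "z \<in> princ D (a * n)" using princ_mem[OF r(1)] by simp
    qed
  next
    have "n \<in> princ D b" using n princ_self by blast
    then obtain q where q: "q \<in> D" "n = b * q" using princ_iff by blast
    have "a * n \<in> princ D (a * b)" using q princ_mem[OF q(1), of "a*b"] by (simp add: mult.assoc)
    moreover have "n \<in> princ D k" using n princ_self by blast
    then obtain q' where q': "q' \<in> D" "n = k * q'" using princ_iff by blast
    have "m \<in> princ D c" using m princ_self by blast
    hence "m * q' \<in> princ D c" using submod_mult'[OF princ_submod q'(1)] by blast
    hence "a * n \<in> princ D c" using q' k by (simp add: mult.assoc)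
    ultimately show "princ D (a * n) \<subseteq> princ D (a * b) \<inter> princ D c"
      using princ_least[OF princ_submod] by (metis Int_greatest)
  qed
  thus "\<exists>m. princ D (a * b) \<inter> princ D c = princ D m" by blast
qed

lemma lcm_prod_list: "\<forall>y\<in>set ys. good y \<Longrightarrow> lcm_el (prod_list ys) \<and> prod_list ys \<in> D \<and> prod_list ys \<noteq> 0"
proof (induction ys)
  case Nil thus ?case using lcm_unit[of 1] by (simp add: is_unit_in_def)
next
  case (Cons y ys)
  hence "good y" "lcm_el (prod_list ys)" "prod_list ys \<in> D" "prod_list ys \<noteq> 0" by auto
  thus ?case using lcm_mult[of y "prod_list ys"] lcm_good good_D good_nz by (simp add: mult)
qed

lemma lcm_all: assumes "x \<in> D" "x \<noteq> 0" shows "lcm_el x"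
proof -
  obtain u ys where d: "is_unit_in D u" "\<forall>y\<in>set ys. good y" "x = u * prod_list ys" using decomp assms by blast
  have "u \<in> D" "u \<noteq> 0" using d(1) unfolding unit_iff by auto
  thus ?thesis using lcm_mult lcm_unit[OF d(1)] lcm_prod_list[OF d(2)] d(3) by simp
qed

lemma gcd_dom: "gcd_domain D"
  unfolding gcd_domain_def
proof (intro conjI sr ballI impI)
  fix a b assume ab: "a \<in> D" "b \<in> D" "a \<noteq> 0" "b \<noteq> 0"
  obtain m where m: "princ D a \<inter> princ D b = princ D m" using lcm_all[OF ab(1,3)] ab unfolding lcm_el_def by blast
  have "a * b \<in> princ D a" "a * b \<in> princ D b" using princ_mem[OF ab(2), of a] princ_mem[OF ab(1), of b]
    by (auto simp: mult.commute)
  hence "a * b \<in> princ D m" using m by blast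
  then obtain g where g: "g \<in> D" "a * b = m * g" using princ_iff by blast
  have m0: "m \<noteq> 0" using g ab by auto
  have "m \<in> princ D b" using m princ_self by blast
  then obtain a2 where a2: "a2 \<in> D" "m = b * a2" using princ_iff by blast
  have "m \<in> princ D a" using m princ_self by blast
  then obtain b2 where b2: "b2 \<in> D" "m = a * b2" using princ_iff by blast
  have "b * a = b * (a2 * g)" using g a2 by (simp add: mult.commute mult.assoc)
  hence "a = g * a2" using ab by (simp add: mult.commute)
  hence ga: "dvd_in D g a" unfolding dvd_in_def using a2 by blast
  have "a * b = a * (b2 * g)" using g b2 by (simp add: mult.assoc)
  hence "b = g * b2" using ab by (simp add: mult.commute)
  hence gb: "dvd_in D g b" unfolding dvd_in_def using b2 by blast
  have "\<forall>e\<in>D. dvd_in D e a \<longrightarrow> dvd_in D e b \<longrightarrow> dvd_in D e g"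
  proof (intro ballI impI)
    fix e assume e: "e \<in> D" "dvd_in D e a" "dvd_in D e b"
    obtain a1 where a1: "a1 \<in> D" "a = e * a1" using e unfolding dvd_in_def by blast
    obtain b1 where b1: "b1 \<in> D" "b = e * b1" using e unfolding dvd_in_def by blast
    have e0: "e \<noteq> 0" using a1 ab by auto
    have "e * a1 * b1 \<in> princ D a" using a1 princ_mem[OF b1(1), of a] by simp
    moreover have "e * a1 * b1 \<in> princ D b" using b1 princ_mem[OF a1(1), of b] by (simp add: mult.commute mult.left_commute)
    ultimately have "e * a1 * b1 \<in> princ D m" using m by blast
    then obtain k where k: "k \<in> D" "e * a1 * b1 = m * k" using princ_iff by blast
    have "m * g = m * (e * k)" using g a1 b1 k by (metis mult.assoc mult.left_commute)
    hence "g = e * k" using m0 by simp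
    thus "dvd_in D e g" unfolding dvd_in_def using k by blast
  qed
  thus "\<exists>d\<in>D. dvd_in D d a \<and> dvd_in D d b \<and> (\<forall>e\<in>D. dvd_in D e a \<longrightarrow> dvd_in D e b \<longrightarrow> dvd_in D e d)"
    using g ga gb by blast
qed

end


context sd1 begin

lemma pair_sub_D: "a \<in> D \<Longrightarrow> b \<in> D \<Longrightarrow> gen_submod D {a, b} \<subseteq> D"
  using gen_least[OF submod_D, of "{a,b}"] by blast

lemma good_not_in: assumes y: "good y" and P: "max_star D st P" "y \<in> P" and s: "s \<in> D" "s \<notin> P"
  shows "st (gen_submod D {y, s}) = D"
proof (rule ccontr)
  assume ne: "st (gen_submod D {y, s}) \<noteq> D"
  have nz: "nz_frac D (gen_submod D {y, s})" using pair_nz qf_D good_D good_nz y s by blast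
  have "st (gen_submod D {y, s}) \<subseteq> D" using st_int[OF nz pair_sub_D[OF good_D[OF y] s(1)]] .
  hence "proper_int_star D st (st (gen_submod D {y, s}))" unfolding proper_int_star_def using st_star[OF nz] ne by blast
  then obtain Q where Q: "max_star D st Q" "st (gen_submod D {y, s}) \<subseteq> Q" using max_exists by blast
  have "{y, s} \<subseteq> st (gen_submod D {y, s})" using gen_sub[of "{y,s}"] st_ext[OF nz] by blast
  hence "y \<in> Q" "s \<in> Q" using Q by auto
  hence "Q = P" using good_unique[OF y Q(1) P(1)] P(2) by simp
  thus False using \<open>s \<in> Q\<close> s by blast
qed

lemma val: assumes P: "max_star D st P" shows "valuation_domain (loc D P)"
  unfolding valuation_domain_def
proof (intro conjI ballI impI)
  have PP: "prime_ideal D P" using max_prime_ideal[OF P] .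
  show "subring (loc D P)" using loc_subring[OF PP] .
  fix x assume x: "x \<in> qf (loc D P)" "x \<noteq> 0"
  hence "x \<in> qf D" using qf_loc[OF PP] by blast
  then obtain a b where ab: "a \<in> D" "b \<in> D" "b \<noteq> 0" "x = a / b" by (rule qfE)
  have a0: "a \<noteq> 0" using ab x by auto
  obtain g a' b' where r: "g \<in> D" "a' \<in> D" "b' \<in> D" "g \<noteq> 0" "a = g * a'" "b = g * b'" "coprime_in a' b'"
    using gcd_reduce[OF gcd_dom ab(1,2) a0 ab(3)] by blast
  have a'0: "a' \<noteq> 0" and b'0: "b' \<noteq> 0" using r a0 ab by auto
  have xe: "x = a' / b'" using ab r by simp
  show "x \<in> loc D P \<or> inverse x \<in> loc D P"
  proof (cases "b' \<in> P")
    case False thus ?thesis using xe locI r by blast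
  next
    case bP: True
    show ?thesis
    proof (cases "a' \<in> P")
      case False thus ?thesis using xe locI[of b' a' P] r by simp
    next
      case aP: True
      obtain y where y: "good y" "y \<in> P" "dvd_in D y a'" using factor_in_prime[OF PP r(2) a'0 aP] by blast
      obtain z where z: "good z" "z \<in> P" "dvd_in D z b'" using factor_in_prime[OF PP r(3) b'0 bP] by blast
      obtain h where h: "st (gen_submod D {y, z}) = princ D h" using good_pair[OF y(1) good_D[OF z(1)] good_nz[OF z(1)]] by blast
      have nz: "nz_frac D (gen_submod D {y, z})" using pair_nz qf_D good_D good_nz y z by blast
      have "{y, z} \<subseteq> P" using y z by blast
      hence "gen_submod D {y, z} \<subseteq> P" using gen_least[OF max_submod[OF P]] by blast
      hence "princ D h \<subseteq> P" using st_mono[OF nz max_nz[OF P]] max_st[OF P] h by metis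
      hence hP: "h \<in> P" using princ_self by blast
      have hD: "h \<in> D" using hP max_sub[OF P] by blast
      have "{y, z} \<subseteq> princ D h" using gen_sub[of "{y,z}"] st_ext[OF nz] h by blast
      hence "dvd_in D h y" "dvd_in D h z" using princ_dvd by auto
      hence "dvd_in D h a'" "dvd_in D h b'" using dvd_in_trans y z by blast+
      hence "is_unit_in D h" using r(7) hD unfolding coprime_in_def by blast
      thus ?thesis using max_unit[OF P hP] by blast
    qed
  qed
qed

lemma inter: "D = qf D \<inter> \<Inter>{loc D P | P. max_star D st P}"
proof
  show "D \<subseteq> qf D \<inter> \<Inter>{loc D P | P. max_star D st P}"
    using qf_D D_loc max_prime_ideal by blast
next
  show "qf D \<inter> \<Inter>{loc D P | P. max_star D st P} \<subseteq> D"
  proof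
    fix t assume t: "t \<in> qf D \<inter> \<Inter>{loc D P | P. max_star D st P}"
    show "t \<in> D"
    proof (cases "t = 0")
      case True thus ?thesis by simp
    next
      case t0: False
      obtain a b where ab: "a \<in> D" "b \<in> D" "b \<noteq> 0" "t = a / b" using t qfE by blast
      have a0: "a \<noteq> 0" using ab t0 by auto
      obtain g a' b' where r: "g \<in> D" "a' \<in> D" "b' \<in> D" "g \<noteq> 0" "a = g * a'" "b = g * b'" "coprime_in a' b'"
        using gcd_reduce[OF gcd_dom ab(1,2) a0 ab(3)] by blast
      have a'0: "a' \<noteq> 0" and b'0: "b' \<noteq> 0" using r a0 ab by auto
      have te: "t = a' / b'" using ab r by simp
      show ?thesis
      proof (cases "is_unit_in D b'")
        case True thus ?thesis using te r(2) unfolding unit_iff by (simp add: divide_inverse mult)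
      next
        case False
        have "princ D b' \<noteq> D"
        proof
          assume "princ D b' = D"
          hence "1 \<in> princ D b'" by simp
          then obtain d where "d \<in> D" "1 = b' * d" using princ_iff by blast
          thus False using False r(3) unfolding is_unit_in_def by metis
        qed
        hence "proper_int_star D st (princ D b')" unfolding proper_int_star_def
          using princ_star[OF qf_D[OF r(3)] b'0] princ_sub_D[OF r(3)] by blast
        then obtain P where P: "max_star D st P" "princ D b' \<subseteq> P" using max_exists by blast
        have PP: "prime_ideal D P" using max_prime_ideal[OF P(1)] .
        have bP: "b' \<in> P" using P princ_self by blast
        obtain y where y: "good y" "y \<in> P" "dvd_in D y b'" using factor_in_prime[OF PP r(3) b'0 bP] by blast
        have "t \<in> loc D P" using t P(1) by blast
        then obtain c s where cs: "c \<in> D" "s \<in> D" "s \<notin> P" "t = c / s" unfolding loc_iff by blast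
        have s0: "s \<noteq> 0" using cs max_0[OF P(1)] by auto
        have "a' * s = c * b'" using te cs s0 b'0 by (simp add: field_simps)
        hence "dvd_in D y (s * a')" using dvd_in_mult_left[OF y(3) cs(1)] by (simp add: mult.commute)
        hence "dvd_in D y a'"
          using star_euclid[OF good_D[OF y(1)] cs(2) good_nz[OF y(1)] good_not_in[OF y(1) P(1) y(2) cs(2,3)] r(2)] by blast
        hence "is_unit_in D y" using y(3) r(7) good_D[OF y(1)] unfolding coprime_in_def by blast
        thus ?thesis using good_nonunit[OF y(1)] by blast
      qed
    qed
  qed
qed

lemma locfin: assumes x: "x \<in> D" "x \<noteq> 0" shows "finite {P. max_star D st P \<and> x \<in> P}"
proof -
  obtain u ys where d: "is_unit_in D u" "\<forall>y\<in>set ys. good y" "x = u * prod_list ys" using decomp x by blast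
  have sD: "set ys \<subseteq> D" using d good_D by blast
  have "{P. max_star D st P \<and> x \<in> P} \<subseteq> (\<lambda>y. M_of D st (princ D y)) ` set ys"
  proof
    fix P assume "P \<in> {P. max_star D st P \<and> x \<in> P}"
    hence P: "max_star D st P" "x \<in> P" by auto
    have PP: "prime_ideal D P" using max_prime_ideal[OF P(1)] .
    have "u \<notin> P" using prime_unit[OF PP d(1)] .
    hence "prod_list ys \<in> P" using prime_mult[OF PP] d(1) prod_listD[OF sD] P(2) d(3)
      unfolding is_unit_in_def by blast
    then obtain y where y: "y \<in> set ys" "y \<in> P" using prime_list[OF PP sD] by blast
    thus "P \<in> (\<lambda>y. M_of D st (princ D y)) ` set ys" using good_M d(2) P(1) by force
  qed
  thus ?thesis using finite_surj by blast
qed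

lemma nz_prime_elem: "prime_ideal D Q \<Longrightarrow> Q \<noteq> {0} \<Longrightarrow> \<exists>x\<in>Q. x \<noteq> 0 \<and> x \<in> D"
  using prime_0 prime_sub by blast

lemma nocommon: assumes "max_star D st P1" "max_star D st P2" "P1 \<noteq> P2"
  shows "\<not> (\<exists>Q. prime_ideal D Q \<and> Q \<noteq> {0} \<and> Q \<subseteq> P1 \<and> Q \<subseteq> P2)"
proof
  assume "\<exists>Q. prime_ideal D Q \<and> Q \<noteq> {0} \<and> Q \<subseteq> P1 \<and> Q \<subseteq> P2"
  then obtain Q where Q: "prime_ideal D Q" "Q \<noteq> {0}" "Q \<subseteq> P1" "Q \<subseteq> P2" by blast
  obtain x where x: "x \<in> Q" "x \<noteq> 0" "x \<in> D" using nz_prime_elem Q by blast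
  obtain y where y: "good y" "y \<in> Q" using factor_in_prime[OF Q(1) x(3) x(2) x(1)] by blast
  thus False using good_unique[OF y(1) assms(1,2)] Q assms(3) by blast
qed

lemma ht1: assumes P: "max_star D st P" shows "height_one D P"
  unfolding height_one_def
proof (intro conjI allI impI)
  show "prime_ideal D P" using max_prime_ideal[OF P] .
  show "P \<noteq> {0}" using max_nz[OF P] unfolding nz_frac_def by blast
  fix Q assume Q: "prime_ideal D Q" "Q \<noteq> {0}" "Q \<subseteq> P"
  obtain x where x: "x \<in> Q" "x \<noteq> 0" "x \<in> D" using nz_prime_elem Q by blast
  obtain y where y: "good y" "y \<in> Q" using factor_in_prime[OF Q(1) x(3) x(2) x(1)] by blast
  have yP: "y \<in> P" using y Q by blast
  have "P \<subseteq> Q"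
  proof
    fix z assume z: "z \<in> P"
    show "z \<in> Q"
    proof (cases "z = 0")
      case True thus ?thesis using prime_0 Q by blast
    next
      case False
      obtain n where "z ^ n \<in> princ D y" using good_type1[OF y(1) P yP z False] by blast
      moreover have "princ D y \<subseteq> Q" using princ_least prime_submod Q y(2) by blast
      ultimately have "z ^ n \<in> Q" by blast
      thus ?thesis using prime_power Q z max_sub[OF P] by blast
    qed
  qed
  thus "Q = P" using Q by blast
qed

lemma dir12: "gcd_domain D \<and> star_GKD D st"
  unfolding star_GKD_def star_IRKT_def using gcd_dom val inter locfin nocommon ht1 by blast

end



locale sd2 = sd +
  assumes G: "gcd_domain D" and K: "star_GKD D st"
begin

lemmas Kp = K[unfolded star_GKD_def star_IRKT_def]
lemma Kval: "max_star D st P \<Longrightarrow> valuation_domain (loc D P)"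
  using Kp[THEN conjunct1, THEN conjunct1] by blast
lemma Kint: "D = qf D \<inter> \<Inter>{loc D P | P. max_star D st P}"
  by (rule Kp[THEN conjunct1, THEN conjunct2, THEN conjunct1])
lemma Kfin: "x \<in> D \<Longrightarrow> x \<noteq> 0 \<Longrightarrow> finite {P. max_star D st P \<and> x \<in> P}"
  using Kp[THEN conjunct1, THEN conjunct2, THEN conjunct2, THEN conjunct1] by blast
lemma Kht: "max_star D st P \<Longrightarrow> height_one D P"
  using Kp[THEN conjunct2] by blast

lemma Kint_mem: "t \<in> qf D \<Longrightarrow> (\<And>P. max_star D st P \<Longrightarrow> t \<in> loc D P) \<Longrightarrow> t \<in> D"
proof -
  assume "t \<in> qf D" "\<And>P. max_star D st P \<Longrightarrow> t \<in> loc D P"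
  hence "t \<in> qf D \<inter> \<Inter>{loc D P | P. max_star D st P}" by blast
  thus ?thesis using Kint by simp
qed

lemma compar: assumes P: "max_star D st P" and ab: "a \<in> D" "b \<in> D"
  shows "(\<exists>v\<in>loc D P. b = a * v) \<or> (\<exists>v\<in>loc D P. a = b * v)"
proof -
  have PP: "prime_ideal D P" using max_prime_ideal[OF P] .
  show ?thesis
  proof (cases "a = 0 \<or> b = 0")
    case True thus ?thesis using D_loc[OF PP zero] by auto
  next
    case False
    have "a / b \<in> qf (loc D P)" using qf_in_loc[OF PP] qfI ab False by blast
    moreover have "a / b \<noteq> 0" using False by simp
    ultimately have "a / b \<in> loc D P \<or> inverse (a / b) \<in> loc D P"
      using Kval[OF P] unfolding valuation_domain_def by blast
    thus ?thesis
    proof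
      assume "a / b \<in> loc D P" thus ?thesis using False by (intro disjI2 bexI[of _ "a/b"]) auto
    next
      assume "inverse (a / b) \<in> loc D P" thus ?thesis using False by (intro disjI1 bexI[of _ "b/a"]) auto
    qed
  qed
qed

lemma coprime_sym: "coprime_in a b \<Longrightarrow> coprime_in b a" unfolding coprime_in_def by blast

lemma pair2: assumes ab: "a \<in> D" "b \<in> D" "a \<noteq> 0" "b \<noteq> 0" "coprime_in a b"
  shows "st (gen_submod D {a, b}) = D"
proof (rule ccontr)
  assume ne: "st (gen_submod D {a, b}) \<noteq> D"
  have nz: "nz_frac D (gen_submod D {a, b})" using pair_nz qf_D ab by blast
  have "st (gen_submod D {a, b}) \<subseteq> D" using st_int[OF nz] gen_least[OF submod_D, of "{a,b}"] ab by blast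
  hence "proper_int_star D st (st (gen_submod D {a, b}))" unfolding proper_int_star_def using st_star[OF nz] ne by blast
  then obtain P where P: "max_star D st P" "st (gen_submod D {a, b}) \<subseteq> P" using max_exists by blast
  have "{a, b} \<subseteq> st (gen_submod D {a, b})" using gen_sub[of "{a,b}"] st_ext[OF nz] by blast
  hence aP: "a \<in> P" and bP: "b \<in> P" using P by auto
  have PP: "prime_ideal D P" using max_prime_ideal[OF P(1)] .
  have key: "\<And>a b. a \<in> D \<Longrightarrow> b \<in> D \<Longrightarrow> a \<noteq> 0 \<Longrightarrow> b \<noteq> 0 \<Longrightarrow> coprime_in a b \<Longrightarrow> b \<in> P \<Longrightarrow>
     \<not> (\<exists>v\<in>loc D P. a = b * v)"
  proof
    fix a b assume h: "a \<in> D" "b \<in> D" "a \<noteq> 0" "b \<noteq> 0" "coprime_in a b" "b \<in> P" "\<exists>v\<in>loc D P. a = b * v"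
    then obtain v where v: "v \<in> loc D P" "a = b * v" by blast
    then obtain r s where rs0: "r \<in> D" "s \<in> D" "s \<notin> P" "v = r / s" unfolding loc_iff by blast
    have rs: "r \<in> D" "s \<in> D" "s \<notin> P" "a = b * (r / s)" using rs0 v by auto
    have "s \<noteq> 0" using rs max_0[OF P(1)] by auto
    hence "s * a = b * r" using rs by simp
    hence "dvd_in D b (s * a)" unfolding dvd_in_def using rs by blast
    hence "dvd_in D b s" using euclid[OF G h(1-5) rs(2)] by blast
    hence "s \<in> princ D b" using princ_dvd by blast
    moreover have "princ D b \<subseteq> P" using princ_least[OF max_submod[OF P(1)] h(6)] .
    ultimately show False using rs by blast
  qed
  show False using compar[OF P(1) ab(1,2)] key[OF ab(1-5) bP] key[OF ab(2,1,4,3) coprime_sym[OF ab(5)] aP] by blast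
qed

lemma pairK: assumes ab: "a \<in> D" "b \<in> D" "a \<noteq> 0" "b \<noteq> 0"
  shows "\<exists>g. g \<in> D \<and> g \<noteq> 0 \<and> st (gen_submod D {a, b}) = princ D g"
proof -
  obtain g a' b' where r: "g \<in> D" "a' \<in> D" "b' \<in> D" "g \<noteq> 0" "a = g * a'" "b = g * b'" "coprime_in a' b'"
    using gcd_reduce[OF G ab] by blast
  have a'0: "a' \<noteq> 0" and b'0: "b' \<noteq> 0" using r ab by auto
  have nz': "nz_frac D (gen_submod D {a', b'})" using pair_nz qf_D r a'0 by blast
  have "gen_submod D {a, b} = (*) g ` gen_submod D {a', b'}" using gen_scale r by simp
  hence "st (gen_submod D {a, b}) = (*) g ` st (gen_submod D {a', b'})" using st_scale[OF qf_D[OF r(1)] r(4) nz'] by simp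
  also have "\<dots> = (*) g ` D" using pair2[OF r(2,3) a'0 b'0 r(7)] by simp
  also have "\<dots> = princ D g" using princ_image[of g 1] by simp
  finally show ?thesis using r by blast
qed

lemma sum_zero: "ideal_sum A {0} = A" unfolding ideal_sum_def by auto

lemma gen_zero: "S \<subseteq> {0} \<Longrightarrow> gen_submod D S = {0}"
proof -
  assume "S \<subseteq> {0}"
  hence "S \<subseteq> princ D 0" by simp
  hence "gen_submod D S \<subseteq> princ D 0" using gen_least[OF princ_submod] by blast
  thus ?thesis using submod_0[OF gen_is_submod, of S] by auto
qed

lemma K_int: "finite S \<Longrightarrow> S \<subseteq> D \<Longrightarrow> (\<exists>s\<in>S. s \<noteq> 0) \<Longrightarrow> \<exists>g. g \<in> D \<and> g \<noteq> 0 \<and> st (gen_submod D S) = princ D g"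
proof (induction S rule: finite_induct)
  case empty thus ?case by simp
next
  case (insert s S)
  have sD: "s \<in> D" and SD: "S \<subseteq> D" using insert by auto
  show ?case
  proof (cases "\<exists>t\<in>S. t \<noteq> 0")
    case True
    then obtain g where g: "g \<in> D" "g \<noteq> 0" "st (gen_submod D S) = princ D g" using insert SD by blast
    obtain t where t: "t \<in> S" "t \<noteq> 0" using True by blast
    have nzS: "nz_frac D (gen_submod D S)" using gen_nz[OF insert(1) _ t] SD qf_D by blast
    show ?thesis
    proof (cases "s = 0")
      case True
      hence "gen_submod D (insert s S) = gen_submod D S" using gen_insert[of s S] sum_zero[of "gen_submod D S"]
        by (simp add: ideal_sum_def add.commute)
      thus ?thesis using g by metis
    next
      case False
      have nzs: "nz_frac D (princ D s)" using princ_nz qf_D sD False by blast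
      have "st (gen_submod D (insert s S)) = st (ideal_sum (princ D s) (gen_submod D S))" using gen_insert by simp
      also have "\<dots> = st (ideal_sum (princ D s) (princ D g))" using st_sum[OF nzs nzS] g by simp
      also have "\<dots> = st (gen_submod D {s, g})" using gen_pair by simp
      finally show ?thesis using pairK[OF sD g(1) False g(2)] by simp
    qed
  next
    case False
    hence "S \<subseteq> {0}" by blast
    hence "gen_submod D (insert s S) = princ D s" using gen_insert gen_zero sum_zero by simp
    moreover have "s \<noteq> 0" using False insert by blast
    ultimately show ?thesis using st_princ[OF qf_D[OF sD]] sD by auto
  qed
qed

lemma K_frac: assumes S: "finite S" "S \<subseteq> qf D" "s \<in> S" "s \<noteq> 0"
  shows "\<exists>y. st (gen_submod D S) = princ D y"
proof -
  obtain d where d: "d \<in> D" "d \<noteq> 0" "\<forall>s\<in>S. d * s \<in> D" using common_denom S by blast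
  have "(*) d ` S \<subseteq> D" using d by blast
  moreover have "d * s \<in> (*) d ` S" "d * s \<noteq> 0" using S d by auto
  ultimately obtain g where g: "st (gen_submod D ((*) d ` S)) = princ D g" using K_int[of "(*) d ` S"] S by blast
  have nz: "nz_frac D (gen_submod D S)" using gen_nz S by blast
  have "(*) d ` st (gen_submod D S) = princ D g" using st_scale[OF qf_D[OF d(1)] d(2) nz] gen_scale g by simp
  hence "(*) (inverse d) ` ((*) d ` st (gen_submod D S)) = princ D (inverse d * g)" using princ_image by simp
  moreover have "(*) (inverse d) ` ((*) d ` X) = X" for X using d(2)
    by (simp add: image_image mult.assoc[symmetric])
  ultimately show ?thesis by metis
qed

lemma ftype_princ: assumes "finite_type D st J" shows "\<exists>y. J = princ D y"
proof -
  obtain F where F: "nz_frac D F" "fin_gen D F" "J = st F" using assms unfolding finite_type_def by blast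
  obtain S where S: "finite S" "F = gen_submod D S" using F unfolding fin_gen_def by blast
  have "S \<subseteq> qf D" using gen_sub frac_qf F S unfolding nz_frac_def by blast
  moreover have "\<exists>s\<in>S. s \<noteq> 0"
  proof (rule ccontr)
    assume "\<not> ?thesis" hence "S \<subseteq> {0}" by blast
    hence "F = {0}" using gen_zero S by simp
    thus False using F unfolding nz_frac_def by blast
  qed
  ultimately show ?thesis using K_frac S F by blast
qed

end


context sd2 begin

lemma loc_pow: "prime_ideal D P \<Longrightarrow> v \<in> loc D P \<Longrightarrow> v ^ n \<in> loc D P"
  by (induction n) (auto intro: loc_mult D_loc)

lemma arch: assumes P: "max_star D st P" and x: "x \<in> D" "x \<noteq> 0" "x \<in> P" and z: "z \<in> P"
  shows "\<exists>N. z ^ N \<in> (*) x ` loc D P"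
proof -
  have PP: "prime_ideal D P" using max_prime_ideal[OF P] .
  let ?V = "loc D P"
  have xVm: "\<And>w v. w \<in> (*) x ` ?V \<Longrightarrow> v \<in> ?V \<Longrightarrow> w * v \<in> (*) x ` ?V"
  proof -
    fix w v assume "w \<in> (*) x ` ?V" "v \<in> ?V"
    then obtain u where u: "u \<in> ?V" "w = x * u" by blast
    hence "w * v = x * (u * v)" by (simp add: mult.assoc)
    thus "w * v \<in> (*) x ` ?V" using loc_mult[OF PP u(1) \<open>v \<in> ?V\<close>] by blast
  qed
  define Q where "Q = {a \<in> D. \<exists>N. a ^ N \<in> (*) x ` ?V}"
  have xQ: "x \<in> Q" unfolding Q_def using x D_loc[OF PP one] by (auto intro!: exI[of _ 1] image_eqI[of _ _ 1])
  have sm: "submod D Q" unfolding submod_def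
  proof (intro conjI ballI)
    show "0 \<in> Q" unfolding Q_def using D_loc[OF PP zero]
      by (auto intro!: exI[of _ 1] image_eqI[of _ _ 0])
  next
    fix a b assume a: "a \<in> Q" and b: "b \<in> Q"
    obtain N where N: "a \<in> D" "a ^ N \<in> (*) x ` ?V" using a unfolding Q_def by blast
    obtain M where M: "b \<in> D" "b ^ M \<in> (*) x ` ?V" using b unfolding Q_def by blast
    have "a + b \<in> D" using N M by (simp add: add)
    moreover have "\<exists>K. (a + b) ^ K \<in> (*) x ` ?V"
    proof (cases "\<exists>v\<in>?V. b = a * v")
      case True
      then obtain v where v: "v \<in> ?V" "b = a * v" by blast
      have "(a + b) ^ N = a ^ N * (1 + v) ^ N" using v by (simp add: power_mult_distrib[symmetric] algebra_simps)
      moreover have "(1 + v) ^ N \<in> ?V" using loc_pow[OF PP loc_add[OF PP D_loc[OF PP one] v(1)]] .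
      ultimately show ?thesis using xVm N by metis
    next
      case False
      then obtain v where v: "v \<in> ?V" "a = b * v" using compar[OF P N(1) M(1)] by blast
      have "(a + b) ^ M = b ^ M * (1 + v) ^ M" using v by (simp add: power_mult_distrib[symmetric] algebra_simps)
      moreover have "(1 + v) ^ M \<in> ?V" using loc_pow[OF PP loc_add[OF PP D_loc[OF PP one] v(1)]] .
      ultimately show ?thesis using xVm M by metis
    qed
    ultimately show "a + b \<in> Q" unfolding Q_def by blast
  next
    fix d a assume d: "d \<in> D" and a: "a \<in> Q"
    obtain N where N: "a \<in> D" "a ^ N \<in> (*) x ` ?V" using a unfolding Q_def by blast
    have "(d * a) ^ N = a ^ N * d ^ N" by (simp add: power_mult_distrib mult.commute)
    moreover have "d ^ N \<in> ?V" using D_loc[OF PP power[OF d]] .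
    ultimately have "(d * a) ^ N \<in> (*) x ` ?V" using xVm N by metis
    thus "d * a \<in> Q" unfolding Q_def using d N by (auto simp: mult)
  qed
  have QD: "Q \<subseteq> D" unfolding Q_def by blast
  have Q1: "1 \<notin> Q"
  proof
    assume "1 \<in> Q"
    then obtain N where "(1::'a) ^ N \<in> (*) x ` ?V" unfolding Q_def by blast
    then obtain u where u: "u \<in> ?V" "1 = x * u" by auto
    then obtain c s where cs: "c \<in> D" "s \<in> D" "s \<notin> P" "u = c / s" unfolding loc_iff by blast
    have "s \<noteq> 0" using cs max_0[OF P] by auto
    hence "s = x * c" using u cs by (simp add: field_simps)
    moreover have "x * c \<in> P" using submod_mult'[OF max_submod[OF P] cs(1) x(3)] .
    ultimately show False using cs by simp
  qed
  have Qprime: "prime_ideal D Q" unfolding prime_ideal_def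
  proof (intro conjI sm QD ballI impI)
    show "Q \<noteq> D" using Q1 one by blast
  next
    fix a b assume ab: "a \<in> D" "b \<in> D" "a * b \<in> Q"
    obtain N where N: "(a * b) ^ N \<in> (*) x ` ?V" using ab unfolding Q_def by blast
    show "a \<in> Q \<or> b \<in> Q"
    proof (cases "\<exists>v\<in>?V. b = a * v")
      case True
      then obtain v where v: "v \<in> ?V" "b = a * v" by blast
      have "b ^ (2 * N) = (a * b) ^ N * v ^ N" using v
        by (simp add: power_mult power2_eq_square power_mult_distrib algebra_simps)
      hence "b ^ (2 * N) \<in> (*) x ` ?V" using xVm[OF N loc_pow[OF PP v(1)]] by simp
      thus ?thesis unfolding Q_def using ab by blast
    next
      case False
      then obtain v where v: "v \<in> ?V" "a = b * v" using compar[OF P ab(1,2)] by blast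
      have "a ^ (2 * N) = (a * b) ^ N * v ^ N" using v
        by (simp add: power_mult power2_eq_square power_mult_distrib algebra_simps)
      hence "a ^ (2 * N) \<in> (*) x ` ?V" using xVm[OF N loc_pow[OF PP v(1)]] by simp
      thus ?thesis unfolding Q_def using ab by blast
    qed
  qed
  have "Q \<noteq> {0}" using xQ x by blast
  moreover have "Q \<subseteq> P"
  proof
    fix a assume "a \<in> Q"
    then obtain N where N: "a \<in> D" "a ^ N \<in> (*) x ` ?V" unfolding Q_def by blast
    then obtain u where u: "u \<in> ?V" "a ^ N = x * u" by blast
    then obtain c s where cs: "c \<in> D" "s \<in> D" "s \<notin> P" "u = c / s" unfolding loc_iff by blast
    have "s \<noteq> 0" using cs max_0[OF P] by auto
    hence "s * a ^ N = x * c" using u cs by (simp add: field_simps)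
    moreover have "x * c \<in> P" using submod_mult'[OF max_submod[OF P] cs(1) x(3)] .
    ultimately have "s * a ^ N \<in> P" by simp
    hence "a ^ N \<in> P" using prime_mult[OF PP cs(2) power[OF N(1)]] cs(3) by blast
    thus "a \<in> P" using prime_power[OF PP N(1)] by blast
  qed
  ultimately have "Q = P" using Kht[OF P] Qprime unfolding height_one_def by blast
  hence "z \<in> Q" using z by simp
  thus ?thesis unfolding Q_def by blast
qed

end


context sd2 begin

lemma constr: assumes P: "max_star D st P" and x: "x \<in> D" "x \<noteq> 0" "x \<in> P"
  and T: "finite T" "T \<subseteq> {Q. max_star D st Q \<and> x \<in> Q} - {P}"
  shows "\<exists>g a. g \<in> D \<and> a \<in> D \<and> x = g * a \<and> a \<notin> P \<and> (\<forall>Q\<in>T. g \<notin> Q)"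
  using T
proof (induction T rule: finite_induct)
  case empty thus ?case using x max_1[OF P] by (intro exI[of _ x] exI[of _ 1]) auto
next
  case (insert Q T)
  have PP: "prime_ideal D P" using max_prime_ideal[OF P] .
  obtain g a where ga: "g \<in> D" "a \<in> D" "x = g * a" "a \<notin> P" "\<forall>Q\<in>T. g \<notin> Q" using insert by blast
  have Q: "max_star D st Q" "Q \<noteq> P" using insert.prems by auto
  have QQ: "prime_ideal D Q" using max_prime_ideal[OF Q(1)] .
  have "\<not> P \<subseteq> Q" using max_incomp[OF P Q(1)] Q(2) by blast
  then obtain z where z: "z \<in> P" "z \<notin> Q" by blast
  have zD: "z \<in> D" using z max_sub[OF P] by blast
  obtain N where "z ^ N \<in> (*) x ` loc D P" using arch[OF P x z(1)] by blast
  then obtain w where w: "w \<in> loc D P" "z ^ N = x * w" by blast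
  have g0: "g \<noteq> 0" using ga x by auto
  have zN0: "z ^ N \<noteq> 0" using z max_0[OF Q(1)] by auto
  have zND: "z ^ N \<in> D" using power[OF zD] .
  obtain h b c where r: "h \<in> D" "b \<in> D" "c \<in> D" "h \<noteq> 0" "g = h * b" "z ^ N = h * c" "coprime_in b c"
    using gcd_reduce[OF G ga(1) zND g0 zN0] by blast
  have b0: "b \<noteq> 0" and c0: "c \<noteq> 0" using r g0 zN0 by auto
  have bP: "b \<notin> P"
  proof
    assume bP: "b \<in> P"
    obtain rr s where rs: "rr \<in> D" "s \<in> D" "s \<notin> P" "w = rr / s" using w(1) unfolding loc_iff by blast
    have s0: "s \<noteq> 0" using rs max_0[OF P] by auto
    have "h * c = h * (b * a * w)" using r w ga by (simp add: algebra_simps)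
    hence "c = b * a * w" using r(4) by simp
    hence "s * c = (a * rr) * b" using rs s0 by (simp add: field_simps)
    moreover have "(a * rr) * b \<in> P" using submod_mult[OF max_submod[OF P] mult[OF ga(2) rs(1)] bP] .
    ultimately have "s * c \<in> P" by simp
    hence cP: "c \<in> P" using prime_mult[OF PP rs(2) r(3)] rs(3) by blast
    have one: "st (gen_submod D {b, c}) = D" using pair2[OF r(2,3) b0 c0 r(7)] .
    have nz: "nz_frac D (gen_submod D {b, c})" using pair_nz qf_D r b0 by blast
    have "{b, c} \<subseteq> P" using bP cP by blast
    hence "gen_submod D {b, c} \<subseteq> P" using gen_least[OF max_submod[OF P]] by blast
    hence "st (gen_submod D {b, c}) \<subseteq> P" using st_mono[OF nz max_nz[OF P]] max_st[OF P] by metis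
    thus False using one max_1[OF P] one by blast
  qed
  have "b * a \<notin> P" using prime_notin_mult[OF PP r(2) ga(2) bP ga(4)] .
  moreover have "x = h * (b * a)" using ga r by (simp add: mult.assoc)
  moreover have "\<forall>Q'\<in>insert Q T. h \<notin> Q'"
  proof
    fix Q' assume Q': "Q' \<in> insert Q T"
    show "h \<notin> Q'"
    proof
      assume hQ: "h \<in> Q'"
      show False
      proof (cases "Q' = Q")
        case True
        hence "z ^ N \<in> Q" using submod_mult'[OF max_submod[OF Q(1)] r(3)] hQ r(6) by simp
        thus False using prime_power[OF QQ zD] z by blast
      next
        case False
        hence "Q' \<in> T" using Q' by blast
        moreover have "max_star D st Q'" using insert.prems \<open>Q' \<in> T\<close> by blast
        hence "g \<in> Q'" using submod_mult'[OF max_submod r(2) hQ] r(5) by simp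
        ultimately show False using ga(5) by blast
      qed
    qed
  qed
  ultimately show ?case using r(1) mult[OF r(2) ga(2)] by blast
qed

definition isg where "isg P g \<longleftrightarrow> max_star D st P \<and> g \<in> P \<and> g \<in> D \<and> g \<noteq> 0 \<and> (\<forall>Q. max_star D st Q \<and> g \<in> Q \<longrightarrow> Q = P)"

lemma isg_fhomog: assumes "isg P g" shows "fhomog_type1 D st (princ D g)"
proof -
  have P: "max_star D st P" and g: "g \<in> P" "g \<in> D" "g \<noteq> 0" and U: "\<And>Q. max_star D st Q \<Longrightarrow> g \<in> Q \<Longrightarrow> Q = P"
    using assms unfolding isg_def by auto
  have PP: "prime_ideal D P" using max_prime_ideal[OF P] .
  have gP: "princ D g \<subseteq> P" using princ_least[OF max_submod[OF P] g(1)] .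
  have prp: "proper_int_star D st (princ D g)" unfolding proper_int_star_def
    using princ_star[OF qf_D[OF g(2)] g(3)] princ_sub_D[OF g(2)] gP max_1[OF P] one by blast
  have ft: "finite_type D st (princ D g)" using princ_ftype[OF qf_D[OF g(2)] g(3)] .
  have inP: "\<And>A. proper_int_star D st A \<Longrightarrow> princ D g \<subseteq> A \<Longrightarrow> A \<subseteq> P"
  proof -
    fix A assume A: "proper_int_star D st A" "princ D g \<subseteq> A"
    obtain Q where Q: "max_star D st Q" "A \<subseteq> Q" using max_exists[OF A(1)] by blast
    have "g \<in> Q" using Q A princ_self by blast
    thus "A \<subseteq> P" using U Q by blast
  qed
  have homog: "star_homog D st (princ D g)" unfolding star_homog_def
  proof (intro conjI prp ft allI impI)
    fix A B assume h: "proper_int_star D st A" "finite_type D st A" "princ D g \<subseteq> A"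
      "proper_int_star D st B" "finite_type D st B" "princ D g \<subseteq> B"
    have "A \<subseteq> P" "B \<subseteq> P" using inP h by auto
    hence sub: "ideal_sum A B \<subseteq> P" using sum_least[OF max_submod[OF P]] by blast
    have nz: "nz_frac D (ideal_sum A B)" using sum_nz h(1,4) unfolding proper_int_star_def star_ideal_def by blast
    have "st (ideal_sum A B) \<subseteq> P" using st_mono[OF nz max_nz[OF P] sub] max_st[OF P] by simp
    thus "st (ideal_sum A B) \<noteq> D" using max_1[OF P] one by blast
  qed
  have fh: "star_fhomog D st (princ D g)" unfolding star_fhomog_def using homog ftype_princ by blast
  have M: "M_of D st (princ D g) = P" using M_of_eq[OF homog P gP] .
  have t1: "homog_type1 D st (princ D g)" unfolding homog_type1_def M
  proof (intro conjI homog ballI impI)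
    fix z assume z: "z \<in> P" "z \<noteq> 0"
    obtain N where "z ^ N \<in> (*) g ` loc D P" using arch[OF P g(2,3,1) z(1)] by blast
    then obtain w where w: "w \<in> loc D P" "z ^ N = g * w" by blast
    have zV: "z \<in> loc D P" using D_loc[OF PP] z max_sub[OF P] by blast
    have zN: "z ^ Suc N = g * (w * z)" using w by (simp add: algebra_simps)
    have "(*) (z ^ Suc N) ` loc D P \<inter> D \<subseteq> princ D g"
    proof
      fix e assume e: "e \<in> (*) (z ^ Suc N) ` loc D P \<inter> D"
      then obtain v where v: "v \<in> loc D P" "e = z ^ Suc N * v" by blast
      have eD: "e \<in> D" using e by blast
      have "e / g \<in> D"
      proof (rule Kint_mem)
        show "e / g \<in> qf D" using qfI eD g(2,3) by blast
      next
        fix Q assume Q: "max_star D st Q"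
        show "e / g \<in> loc D Q"
        proof (cases "Q = P")
          case True
          have "e / g = w * z * v" using v zN g(3) by (simp add: field_simps)
          thus ?thesis using True loc_mult[OF PP loc_mult[OF PP w(1) zV] v(1)] by simp
        next
          case False
          hence "g \<notin> Q" using U Q by blast
          thus ?thesis using locI eD g(2) by blast
        qed
      qed
      moreover have "e = g * (e / g)" using g(3) by simp
      ultimately show "e \<in> princ D g" using princ_mem by metis
    qed
    thus "\<exists>n\<ge>1. (*) (z ^ n) ` loc D P \<inter> D \<subseteq> princ D g" by (intro exI[of _ "Suc N"]) simp
  qed
  show ?thesis unfolding fhomog_type1_def using fh t1 by blast
qed

end


context sd2 begin

lemma decomp2: "x \<in> D \<Longrightarrow> x \<noteq> 0 \<Longrightarrow> \<exists>u ys. is_unit_in D u \<and> (\<forall>y\<in>set ys. \<exists>P. isg P y) \<and> x = u * prod_list ys"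
proof (induction "card {P. max_star D st P \<and> x \<in> P}" arbitrary: x rule: less_induct)
  case less
  let ?S = "{P. max_star D st P \<and> x \<in> P}"
  have fin: "finite ?S" using Kfin less.prems by blast
  show ?case
  proof (cases "?S = {}")
    case True
    have "is_unit_in D x"
    proof (rule ccontr)
      assume nu: "\<not> is_unit_in D x"
      have "princ D x \<noteq> D"
      proof
        assume "princ D x = D"
        hence "1 \<in> princ D x" by simp
        then obtain d where "d \<in> D" "1 = x * d" using princ_iff by blast
        thus False using nu less.prems unfolding is_unit_in_def by metis
      qed
      hence "proper_int_star D st (princ D x)" unfolding proper_int_star_def
        using princ_star[OF qf_D[OF less.prems(1)] less.prems(2)] princ_sub_D[OF less.prems(1)] by blast
      then obtain P where "max_star D st P" "princ D x \<subseteq> P" using max_exists by blast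
      hence "P \<in> ?S" using princ_self by blast
      thus False using True by blast
    qed
    thus ?thesis by (intro exI[of _ x] exI[of _ "[]"]) simp
  next
    case False
    then obtain P where P: "max_star D st P" "x \<in> P" by blast
    have PP: "prime_ideal D P" using max_prime_ideal[OF P(1)] .
    have "finite (?S - {P})" using fin by blast
    then obtain g a where ga: "g \<in> D" "a \<in> D" "x = g * a" "a \<notin> P" "\<forall>Q\<in>?S - {P}. g \<notin> Q"
      using constr[OF P(1) less.prems P(2)] by blast
    have g0: "g \<noteq> 0" and a0: "a \<noteq> 0" using ga less.prems by auto
    have gP: "g \<in> P" using prime_mult[OF PP ga(1,2)] ga P(2) by blast
    have "isg P g" unfolding isg_def
    proof (intro conjI P(1) gP ga(1) g0 allI impI)
      fix Q assume Q: "max_star D st Q \<and> g \<in> Q"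
      hence "x \<in> Q" using submod_mult'[OF max_submod ga(2)] ga(3) by simp
      thus "Q = P" using ga(5) Q by blast
    qed
    have sub: "{P. max_star D st P \<and> a \<in> P} \<subseteq> ?S - {P}"
    proof
      fix Q assume "Q \<in> {P. max_star D st P \<and> a \<in> P}"
      hence Q: "max_star D st Q" "a \<in> Q" by auto
      hence "x \<in> Q" using submod_mult[OF max_submod ga(1)] ga(3) by simp
      thus "Q \<in> ?S - {P}" using Q ga(4) by blast
    qed
    have "card {P. max_star D st P \<and> a \<in> P} < card ?S"
    proof -
      have "card {P. max_star D st P \<and> a \<in> P} \<le> card (?S - {P})" using card_mono[OF _ sub] fin by blast
      also have "\<dots> < card ?S" using card_Diff1_less[OF fin, of P] P by blast
      finally show ?thesis .
    qed
    then obtain u ys where d: "is_unit_in D u" "\<forall>y\<in>set ys. \<exists>P. isg P y" "a = u * prod_list ys"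
      using less.hyps[OF _ ga(2) a0] by blast
    have "x = u * prod_list (g # ys)" using ga(3) d(3) by (simp add: algebra_simps)
    moreover have "\<forall>y\<in>set (g # ys). \<exists>P. isg P y" using d(2) \<open>isg P g\<close> by auto
    ultimately show ?thesis using d(1) by blast
  qed
qed

lemma dir21: "\<forall>x\<in>D. x \<noteq> 0 \<longrightarrow> \<not> is_unit_in D x \<longrightarrow>
            (\<exists>Is. (\<forall>I\<in>set Is. fhomog_type1 D st I) \<and> princ D x = st (ideal_prod_list D Is))"
proof (intro ballI impI)
  fix x assume x: "x \<in> D" "x \<noteq> 0"
  obtain u ys where d: "is_unit_in D u" "\<forall>y\<in>set ys. \<exists>P. isg P y" "x = u * prod_list ys" using decomp2 x by blast
  have "set ys \<subseteq> D" using d(2) unfolding isg_def by blast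
  hence pD: "prod_list ys \<in> D" by blast
  have p0: "prod_list ys \<noteq> 0" using d(3) x by auto
  have "ideal_prod_list D (map (princ D) ys) = princ D (prod_list ys)" using ideal_prod_list_princ .
  hence "st (ideal_prod_list D (map (princ D) ys)) = princ D (prod_list ys)" using st_princ[OF qf_D[OF pD] p0] by simp
  also have "\<dots> = princ D x" using princ_unit[OF d(1), of "prod_list ys"] d(3) by (simp add: mult.commute)
  finally have "princ D x = st (ideal_prod_list D (map (princ D) ys))" by simp
  moreover have "\<forall>I\<in>set (map (princ D) ys). fhomog_type1 D st I" using d(2) isg_fhomog by auto
  ultimately show "\<exists>Is. (\<forall>I\<in>set Is. fhomog_type1 D st I) \<and> princ D x = st (ideal_prod_list D Is)" by blast
qed

end

theorem theoremS3:
  fixes D :: "'k::field set" and st :: "'k set \<Rightarrow> 'k set"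
  assumes "subring D" and "star_op D st" and "finite_character D st"
  shows "(\<forall>x\<in>D. x \<noteq> 0 \<longrightarrow> \<not> is_unit_in D x \<longrightarrow>
            (\<exists>Is. (\<forall>I\<in>set Is. fhomog_type1 D st I) \<and>
                  princ D x = st (ideal_prod_list D Is)))
         \<longleftrightarrow> gcd_domain D \<and> star_GKD D st"
proof
  assume h: "\<forall>x\<in>D. x \<noteq> 0 \<longrightarrow> \<not> is_unit_in D x \<longrightarrow>
            (\<exists>Is. (\<forall>I\<in>set Is. fhomog_type1 D st I) \<and> princ D x = st (ideal_prod_list D Is))"
  have "sd1 D st" unfolding sd1_def sd1_axioms_def sd_def sd_axioms_def dom_def using assms h by blast
  thus "gcd_domain D \<and> star_GKD D st" using sd1.dir12 by blast
next
  assume h: "gcd_domain D \<and> star_GKD D st"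
  have "sd2 D st" unfolding sd2_def sd2_axioms_def sd_def sd_axioms_def dom_def using assms h by blast
  thus "\<forall>x\<in>D. x \<noteq> 0 \<longrightarrow> \<not> is_unit_in D x \<longrightarrow>
            (\<exists>Is. (\<forall>I\<in>set Is. fhomog_type1 D st I) \<and> princ D x = st (ideal_prod_list D Is))"
    using sd2.dir21 by blast
qed


end
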